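(* Let $R$ be a two-dimensional regular local domain with regular parameters $\pi,\delta$, residue field $k=R/M$ and fraction field $K$. Let $T$ be transcendental over $K$ and let $a,b$ be positive integers. Then there is a discrete valuation $d:K(T)^*\to{\mathbb Z}$ such that $d(T)=1$, $d(\pi)=a$, $d(\delta)=b$, and the residue field of $d$ is $k(\pi',\delta')$, where $\pi'$ and $\delta'$ are the images of $\pi/T^a$ and $\delta/T^b$, and $\pi',\delta'$ are algebraically independent over $k$. *)

theory Defs
  imports Main "HOL-Library.Extended_Nat" "HOL-Computational_Algebra.Fraction_Field"
    "HOL-Computational_Algebra.Polynomial"
begin

definition is_ideal :: "'a::comm_ring_1 set \<Rightarrow> bool" where
  "is_ideal I \<longleftrightarrow> 0 \<in> I \<and> (\<forall>x\<in>I. \<forall>y\<in>I. x + y \<in> I) \<and> (\<forall>r. \<forall>x\<in>I. r * x \<in> I)"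

definition prime_ideal :: "'a::comm_ring_1 set \<Rightarrow> bool" where
  "prime_ideal P \<longleftrightarrow> is_ideal P \<and> P \<noteq> UNIV \<and> (\<forall>x y. x * y \<in> P \<longrightarrow> x \<in> P \<or> y \<in> P)"

definition maximal_ideal :: "'a::comm_ring_1 set \<Rightarrow> bool" where
  "maximal_ideal M \<longleftrightarrow> is_ideal M \<and> M \<noteq> UNIV \<and>
     (\<forall>J. is_ideal J \<and> M \<subseteq> J \<longrightarrow> J = M \<or> J = UNIV)"

definition noetherian_ring :: "'a::comm_ring_1 itself \<Rightarrow> bool" where
  "noetherian_ring _ \<longleftrightarrow> (\<forall>I :: nat \<Rightarrow> 'a set. (\<forall>n. is_ideal (I n)) \<and> mono I \<longrightarrow>
      (\<exists>N. \<forall>n\<ge>N. I n = I N))"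

definition local_ring :: "'a::comm_ring_1 itself \<Rightarrow> bool" where
  "local_ring _ \<longleftrightarrow> (\<exists>!M :: 'a set. maximal_ideal M)"

definition krull_dim :: "'a::comm_ring_1 itself \<Rightarrow> enat" where
  "krull_dim _ = Sup {enat n | n. \<exists>P :: nat \<Rightarrow> 'a set.
      (\<forall>i\<le>n. prime_ideal (P i)) \<and> (\<forall>i<n. P i \<subset> P (Suc i))}"

definition ideal2 :: "'a::comm_ring_1 \<Rightarrow> 'a \<Rightarrow> 'a set" where
  "ideal2 x y = {r * x + s * y | r s. True}"

text \<open>A (normalised) discrete valuation on the nonzero elements of a field; values at 0 are irrelevant.\<close>
definition discrete_valuation :: "('b::field \<Rightarrow> int) \<Rightarrow> bool" where
  "discrete_valuation d \<longleftrightarrow>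
     (\<forall>x y. x \<noteq> 0 \<longrightarrow> y \<noteq> 0 \<longrightarrow> d (x * y) = d x + d y) \<and>
     (\<forall>x y. x \<noteq> 0 \<longrightarrow> y \<noteq> 0 \<longrightarrow> x + y \<noteq> 0 \<longrightarrow> min (d x) (d y) \<le> d (x + y)) \<and>
     d ` (UNIV - {0}) = UNIV"

definition val_ring :: "('b::field \<Rightarrow> int) \<Rightarrow> 'b set" where
  "val_ring d = {x. x = 0 \<or> 0 \<le> d x}"

definition val_max :: "('b::field \<Rightarrow> int) \<Rightarrow> 'b set" where
  "val_max d = {x. x = 0 \<or> 0 < d x}"

section \<open>The field K(T) = Frac(K[T]), K = Frac(R)\<close>

type_synonym 'a ratfun = "'a fract poly fract"

definition varT :: "'a::idom ratfun" where
  "varT = Fract [:0, 1:] 1"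

definition embR :: "'a::idom \<Rightarrow> 'a ratfun" where
  "embR r = Fract [: Fract r 1 :] 1"

definition poly2 :: "nat \<Rightarrow> (nat \<Rightarrow> nat \<Rightarrow> 'a::idom) \<Rightarrow> 'a ratfun \<Rightarrow> 'a ratfun \<Rightarrow> 'a ratfun" where
  "poly2 N c u v = (\<Sum>i<N. \<Sum>j<N. embR (c i j) * u ^ i * v ^ j)"

end

theory Submission
  imports Defs
begin


definition valp :: "('b::idom \<Rightarrow> int) \<Rightarrow> bool" where
  "valp v \<longleftrightarrow> (\<forall>x y. x \<noteq> 0 \<longrightarrow> y \<noteq> 0 \<longrightarrow> v (x * y) = v x + v y) \<and>
     (\<forall>x y. x \<noteq> 0 \<longrightarrow> y \<noteq> 0 \<longrightarrow> x + y \<noteq> 0 \<longrightarrow> min (v x) (v y) \<le> v (x + y))"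

lemma valp_mult: "valp v \<Longrightarrow> x \<noteq> 0 \<Longrightarrow> y \<noteq> 0 \<Longrightarrow> v (x * y) = v x + v y"
  unfolding valp_def by blast

lemma valp_add: "valp v \<Longrightarrow> x \<noteq> 0 \<Longrightarrow> y \<noteq> 0 \<Longrightarrow> x + y \<noteq> 0 \<Longrightarrow> min (v x) (v y) \<le> v (x + y)"
  unfolding valp_def by blast

lemma valp_one: "valp v \<Longrightarrow> v 1 = 0"
  using valp_mult[of v 1 1] by simp

lemma valp_uminus: assumes "valp v" shows "v (- x) = v x"
proof (cases "x = 0")
  case False
  have "v ((-1) * (-1)) = v (-1) + v (-1)" using valp_mult[OF assms, of "-1" "-1"] by simp
  then have "v (-1) = 0" using valp_one[OF assms] by simp
  then show ?thesis using valp_mult[OF assms, of "-1" x] False by simp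
qed simp

lemma valp_ge:
  assumes "valp v" "x = 0 \<or> c \<le> v x" "y = 0 \<or> c \<le> v y"
  shows "x + y = 0 \<or> c \<le> v (x + y)"
proof (cases "x = 0 \<or> y = 0 \<or> x + y = 0")
  case False
  then have "min (v x) (v y) \<le> v (x + y)" using valp_add[OF assms(1), of x y] by auto
  then show ?thesis using assms False by linarith
qed (use assms in auto)

lemma valp_ge_diff:
  assumes "valp v" "x = 0 \<or> c \<le> v x" "y = 0 \<or> c \<le> v y"
  shows "x - y = 0 \<or> c \<le> v (x - y)"
  using valp_ge[OF assms(1,2), of "-y"] assms(3) valp_uminus[OF assms(1), of y] by auto

lemma valp_sum_ge:
  assumes "valp v" "finite A" "\<forall>i\<in>A. f i = 0 \<or> c \<le> v (f i)"
  shows "sum f A = 0 \<or> c \<le> v (sum f A)"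
  using assms(2,3)
proof (induction A rule: finite_induct)
  case (insert x F)
  then show ?case using valp_ge[OF assms(1), of "f x" c "sum f F"] by simp
qed simp

lemma valp_strict:
  assumes "valp v" "x \<noteq> 0" "y = 0 \<or> v x < v y"
  shows "x + y \<noteq> 0 \<and> v (x + y) = v x"
proof (cases "y = 0")
  case False
  then have lt: "v x < v y" using assms by auto
  have nz: "x + y \<noteq> 0"
  proof
    assume "x + y = 0" then have "x = - y" by (simp add: eq_neg_iff_add_eq_0)
    then show False using lt valp_uminus[OF assms(1), of y] by simp
  qed
  have 1: "min (v x) (v y) \<le> v (x + y)" using valp_add[OF assms(1) assms(2) False nz] .
  have "x = (x + y) + (- y)" by simp
  then have "min (v (x+y)) (v (-y)) \<le> v x"
    using valp_add[OF assms(1) nz, of "-y"] False assms(2) by (metis neg_equal_0_iff_equal)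
  then show ?thesis using 1 lt nz valp_uminus[OF assms(1), of y] by auto
qed (use assms in auto)

section \<open>Extension to fractions\<close>

definition fext :: "('b::idom \<Rightarrow> int) \<Rightarrow> 'b fract \<Rightarrow> int" where
  "fext v q = (let p = (SOME p. snd p \<noteq> 0 \<and> q = Fract (fst p) (snd p)) in v (fst p) - v (snd p))"

lemma fext_Fract:
  assumes "valp v" "r \<noteq> 0" "s \<noteq> 0"
  shows "fext v (Fract r s) = v r - v s"
proof -
  define p where "p = (SOME p. snd p \<noteq> 0 \<and> Fract r s = Fract (fst p) (snd p))"
  have "\<exists>p. snd p \<noteq> 0 \<and> Fract r s = Fract (fst p) (snd p)" using assms by (intro exI[of _ "(r,s)"]) auto
  then have p: "snd p \<noteq> 0 \<and> Fract r s = Fract (fst p) (snd p)" unfolding p_def by (rule someI_ex)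
  then have e: "r * snd p = fst p * s" using assms eq_fract(1) by blast
  then have "fst p \<noteq> 0" using assms p by auto
  then have "v r + v (snd p) = v (fst p) + v s"
    using e valp_mult[OF assms(1)] assms p by metis
  then show ?thesis unfolding fext_def p_def[symmetric] Let_def by simp
qed

lemma valp_fext:
  assumes v: "valp v" shows "valp (fext v)"
  unfolding valp_def
proof (intro conjI allI impI)
  fix x y :: "'a fract" assume x: "x \<noteq> 0" and y: "y \<noteq> 0"
  obtain r s where xr: "x = Fract r s" "s \<noteq> 0" "r \<noteq> 0" using x by (cases x rule: Fract_cases_nonzero) auto
  obtain r' s' where yr: "y = Fract r' s'" "s' \<noteq> 0" "r' \<noteq> 0" using y by (cases y rule: Fract_cases_nonzero) auto
  show "fext v (x * y) = fext v x + fext v y"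
    using xr yr by (simp add: fext_Fract[OF v] valp_mult[OF v])
  assume xy: "x + y \<noteq> 0"
  have sum: "x + y = Fract (r * s' + r' * s) (s * s')" using xr yr by simp
  have nz: "r * s' + r' * s \<noteq> 0" using xy sum by (auto simp: fract_collapse)
  have "min (v (r*s')) (v (r'*s)) \<le> v (r * s' + r' * s)"
    using valp_add[OF v, of "r*s'" "r'*s"] nz xr yr by simp
  then show "min (fext v x) (fext v y) \<le> fext v (x + y)"
    using xr yr nz by (simp add: sum fext_Fract[OF v] valp_mult[OF v])
qed

section \<open>Gauss extension to polynomials, T of weight 1\<close>

definition gext :: "('k::idom \<Rightarrow> int) \<Rightarrow> 'k poly \<Rightarrow> int" where
  "gext v p = Min ((\<lambda>m. v (coeff p m) + int m) ` {m. coeff p m \<noteq> 0})"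

lemma finite_coeff_nz: "finite {m. coeff p m \<noteq> 0}"
  by (rule finite_subset[of _ "{..degree p}"]) (auto intro: le_degree)

lemma gext_le: "coeff p m \<noteq> 0 \<Longrightarrow> gext v p \<le> v (coeff p m) + int m"
  unfolding gext_def by (rule Min_le) (auto simp: finite_coeff_nz)

lemma gext_ge: "p \<noteq> 0 \<Longrightarrow> (\<And>m. coeff p m \<noteq> 0 \<Longrightarrow> c \<le> v (coeff p m) + int m) \<Longrightarrow> c \<le> gext v p"
  unfolding gext_def
  by (subst Min_ge_iff) (auto simp: finite_coeff_nz poly_eq_iff)

lemma gext_attained: "p \<noteq> 0 \<Longrightarrow> \<exists>m. coeff p m \<noteq> 0 \<and> gext v p = v (coeff p m) + int m"
proof -
  assume "p \<noteq> 0"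
  then have ne: "{m. coeff p m \<noteq> 0} \<noteq> {}" by (auto simp: poly_eq_iff)
  have "gext v p \<in> (\<lambda>m. v (coeff p m) + int m) ` {m. coeff p m \<noteq> 0}"
    unfolding gext_def by (rule Min_in) (use ne finite_coeff_nz in auto)
  then show ?thesis by auto
qed

lemma gext_least:
  assumes "p \<noteq> 0"
  obtains i0 where "coeff p i0 \<noteq> 0" "gext v p = v (coeff p i0) + int i0"
    "\<And>i. i < i0 \<Longrightarrow> coeff p i = 0 \<or> gext v p < v (coeff p i) + int i"
proof -
  define P where "P i \<longleftrightarrow> coeff p i \<noteq> 0 \<and> gext v p = v (coeff p i) + int i" for i
  obtain m where "P m" using gext_attained[OF assms] P_def by blast
  then have P0: "P (LEAST i. P i)" by (rule LeastI)
  have "coeff p i = 0 \<or> gext v p < v (coeff p i) + int i" if "i < (LEAST i. P i)" for i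
  proof -
    have "\<not> P i" using not_less_Least[OF that] .
    then show ?thesis using gext_le[of p i v] unfolding P_def by force
  qed
  then show ?thesis using that P0 unfolding P_def by blast
qed

lemma valp_gext:
  assumes v: "valp v" shows "valp (gext v)"
  unfolding valp_def
proof (intro conjI allI impI)
  fix p q :: "'a poly" assume p: "p \<noteq> 0" and q: "q \<noteq> 0"
  {
    assume pq: "p + q \<noteq> 0"
    show "min (gext v p) (gext v q) \<le> gext v (p + q)"
    proof (rule gext_ge[OF pq])
      fix m assume nz: "coeff (p + q) m \<noteq> 0"
      let ?c = "min (gext v p) (gext v q) - int m"
      have "coeff p m = 0 \<or> ?c \<le> v (coeff p m)" using gext_le[of p m v] by force
      moreover have "coeff q m = 0 \<or> ?c \<le> v (coeff q m)" using gext_le[of q m v] by force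
      ultimately have "coeff p m + coeff q m = 0 \<or> ?c \<le> v (coeff p m + coeff q m)"
        by (rule valp_ge[OF v])
      then show "min (gext v p) (gext v q) \<le> v (coeff (p + q) m) + int m" using nz by auto
    qed
  }
  have ge: "gext v p + gext v q \<le> gext v (p * q)"
  proof (rule gext_ge)
    show "p * q \<noteq> 0" using p q by simp
    fix m assume nz: "coeff (p * q) m \<noteq> 0"
    let ?c = "gext v p + gext v q - int m"
    have "\<forall>i\<in>{..m}. coeff p i * coeff q (m - i) = 0 \<or> ?c \<le> v (coeff p i * coeff q (m - i))"
    proof
      fix i assume i: "i \<in> {..m}"
      show "coeff p i * coeff q (m - i) = 0 \<or> ?c \<le> v (coeff p i * coeff q (m - i))"
      proof (cases "coeff p i = 0 \<or> coeff q (m - i) = 0")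
        case False
        then show ?thesis using gext_le[of p i v] gext_le[of q "m - i" v] i valp_mult[OF v, of "coeff p i" "coeff q (m - i)"]
          by auto
      qed auto
    qed
    from valp_sum_ge[OF v _ this] have "coeff (p * q) m = 0 \<or> ?c \<le> v (coeff (p * q) m)"
      by (simp add: coeff_mult)
    then show "gext v p + gext v q \<le> v (coeff (p * q) m) + int m" using nz by simp
  qed
  have le: "gext v (p * q) \<le> gext v p + gext v q"
  proof -
    obtain i0 where i0: "coeff p i0 \<noteq> 0" "gext v p = v (coeff p i0) + int i0"
      "\<And>i. i < i0 \<Longrightarrow> coeff p i = 0 \<or> gext v p < v (coeff p i) + int i" using gext_least[OF p] by blast
    obtain j0 where j0: "coeff q j0 \<noteq> 0" "gext v q = v (coeff q j0) + int j0"
      "\<And>i. i < j0 \<Longrightarrow> coeff q i = 0 \<or> gext v q < v (coeff q i) + int i" using gext_least[OF q] by blast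
    define m where "m = i0 + j0"
    define t where "t i = coeff p i * coeff q (m - i)" for i
    have t0: "t i0 \<noteq> 0" "v (t i0) = gext v p + gext v q - int m"
      using i0 j0 valp_mult[OF v, of "coeff p i0" "coeff q j0"] by (auto simp: t_def m_def)
    have rest: "\<forall>i\<in>{..m} - {i0}. t i = 0 \<or> gext v p + gext v q - int m + 1 \<le> v (t i)"
    proof
      fix i assume i: "i \<in> {..m} - {i0}"
      show "t i = 0 \<or> gext v p + gext v q - int m + 1 \<le> v (t i)"
      proof (cases "coeff p i = 0 \<or> coeff q (m - i) = 0")
        case False
        have vt: "v (t i) = v (coeff p i) + v (coeff q (m - i))"
          using False valp_mult[OF v] by (simp add: t_def)
        show ?thesis
        proof (cases "i < i0")
          case True
          then show ?thesis using i0(3)[OF True] gext_le[of q "m - i" v] False vt i by auto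
        next
          case False2: False
          then have "m - i < j0" using i by (auto simp: m_def)
          then show ?thesis using j0(3)[of "m - i"] gext_le[of p i v] False vt i by auto
        qed
      qed (auto simp: t_def)
    qed
    have "sum t ({..m} - {i0}) = 0 \<or> gext v p + gext v q - int m + 1 \<le> v (sum t ({..m} - {i0}))"
      by (rule valp_sum_ge[OF v _ rest]) simp
    then have "sum t ({..m} - {i0}) = 0 \<or> v (t i0) < v (sum t ({..m} - {i0}))" using t0 by auto
    from valp_strict[OF v t0(1) this]
    have st: "t i0 + sum t ({..m} - {i0}) \<noteq> 0 \<and> v (t i0 + sum t ({..m} - {i0})) = v (t i0)" .
    have "coeff (p * q) m = t i0 + sum t ({..m} - {i0})"
      unfolding coeff_mult t_def[symmetric] by (subst sum.remove[of _ i0]) (auto simp: m_def)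
    then have "coeff (p * q) m \<noteq> 0" "v (coeff (p * q) m) = v (t i0)" using st by auto
    then show ?thesis using gext_le[of "p * q" m v] t0 by simp
  qed
  show "gext v (p * q) = gext v p + gext v q" using ge le by simp
qed


lemma ideal_0: "is_ideal I \<Longrightarrow> 0 \<in> I" unfolding is_ideal_def by blast
lemma ideal_add: "is_ideal I \<Longrightarrow> x \<in> I \<Longrightarrow> y \<in> I \<Longrightarrow> x + y \<in> I" unfolding is_ideal_def by blast
lemma ideal_mult: "is_ideal I \<Longrightarrow> x \<in> I \<Longrightarrow> r * x \<in> I" unfolding is_ideal_def by blast
lemma ideal_mult2: "is_ideal I \<Longrightarrow> x \<in> I \<Longrightarrow> x * r \<in> I" using ideal_mult[of I x r] by (simp add: mult.commute)
lemma ideal_uminus: "is_ideal I \<Longrightarrow> x \<in> I \<Longrightarrow> - x \<in> I" using ideal_mult[of I x "-1"] by simp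
lemma ideal_diff: "is_ideal I \<Longrightarrow> x \<in> I \<Longrightarrow> y \<in> I \<Longrightarrow> x - y \<in> I"
  using ideal_add[of I x "-y"] ideal_uminus[of I y] by simp
lemma ideal_sum: "is_ideal I \<Longrightarrow> (\<And>i. i \<in> A \<Longrightarrow> f i \<in> I) \<Longrightarrow> sum f A \<in> I"
  by (induction A rule: infinite_finite_induct) (auto intro: ideal_0 ideal_add)
lemma ideal_UNIV_iff: "is_ideal I \<Longrightarrow> I = UNIV \<longleftrightarrow> 1 \<in> I"
  using ideal_mult[of I 1] by auto

lemma is_ideal_dvd: "is_ideal {y. x dvd y}"
  unfolding is_ideal_def by auto

lemma is_ideal_ideal2: "is_ideal (ideal2 x y)"
  unfolding is_ideal_def ideal2_def
proof (intro conjI ballI allI)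
  have "0 = 0 * x + 0 * y" by simp
  then show "0 \<in> {r * x + s * y |r s. True}" by blast
  fix u v assume "u \<in> {r * x + s * y |r s. True}" "v \<in> {r * x + s * y |r s. True}"
  then obtain r s r' s' where "u = r * x + s * y" "v = r' * x + s' * y" by auto
  then show "u + v \<in> {r * x + s * y |r s. True}"
    by (intro CollectI exI[of _ "r + r'"] exI[of _ "s + s'"]) (simp add: algebra_simps)
next
  fix t u assume "u \<in> {r * x + s * y |r s. True}"
  then obtain r s where "u = r * x + s * y" by auto
  then show "t * u \<in> {r * x + s * y |r s. True}"
    by (intro CollectI exI[of _ "t * r"] exI[of _ "t * s"]) (simp add: algebra_simps)
qed

lemma ideal2_mem1: "x \<in> ideal2 x y"
proof - have "x = 1 * x + 0 * y" by simp then show ?thesis unfolding ideal2_def by blast qed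
lemma ideal2_mem2: "y \<in> ideal2 x y"
proof - have "y = 0 * x + 1 * y" by simp then show ?thesis unfolding ideal2_def by blast qed
lemma ideal2_least: "is_ideal I \<Longrightarrow> x \<in> I \<Longrightarrow> y \<in> I \<Longrightarrow> ideal2 x y \<subseteq> I"
  unfolding ideal2_def by (auto intro: ideal_add ideal_mult)
lemma ideal2_sym: "ideal2 x y = ideal2 y x"
  using ideal2_least[OF is_ideal_ideal2 ideal2_mem2 ideal2_mem1] by blast

fun lspan :: "'a::comm_ring_1 list \<Rightarrow> 'a set" where
  "lspan [] = {0}"
| "lspan (g # gs) = {r * g + h | r h. h \<in> lspan gs}"

lemma is_ideal_lspan: "is_ideal (lspan gs)"
proof (induction gs)
  case Nil then show ?case by (simp add: is_ideal_def)
next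
  case (Cons g gs)
  show ?case unfolding is_ideal_def lspan.simps
  proof (intro conjI ballI allI)
    show "0 \<in> {r * g + h |r h. h \<in> lspan gs}" using ideal_0[OF Cons] by (auto intro!: exI[of _ 0])
    fix u v assume "u \<in> {r * g + h |r h. h \<in> lspan gs}" "v \<in> {r * g + h |r h. h \<in> lspan gs}"
    then obtain r h r' h' where "u = r * g + h" "v = r' * g + h'" "h \<in> lspan gs" "h' \<in> lspan gs" by auto
    then show "u + v \<in> {r * g + h |r h. h \<in> lspan gs}"
      using ideal_add[OF Cons, of h h'] by (intro CollectI exI[of _ "r + r'"] exI[of _ "h + h'"]) (simp add: algebra_simps)
  next
    fix t u assume "u \<in> {r * g + h |r h. h \<in> lspan gs}"
    then obtain r h where "u = r * g + h" "h \<in> lspan gs" by auto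
    then show "t * u \<in> {r * g + h |r h. h \<in> lspan gs}"
      using ideal_mult[OF Cons, of h t] by (intro CollectI exI[of _ "t * r"] exI[of _ "t * h"]) (simp add: algebra_simps)
  qed
qed

lemma lspan_subset: "is_ideal I \<Longrightarrow> set gs \<subseteq> I \<Longrightarrow> lspan gs \<subseteq> I"
  by (induction gs) (auto intro: ideal_0 ideal_add ideal_mult)

lemma lspan_Cons_mem: "g \<in> lspan (g # gs)"
proof -
  have "0 \<in> lspan gs" by (rule ideal_0[OF is_ideal_lspan])
  moreover have "g = 1 * g + 0" by simp
  ultimately show ?thesis unfolding lspan.simps by blast
qed

lemma lspan_Cons_sub: "lspan gs \<subseteq> lspan (g # gs)"
proof
  fix x assume "x \<in> lspan gs"
  moreover have "x = 0 * g + x" by simp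
  ultimately show "x \<in> lspan (g # gs)" unfolding lspan.simps by blast

qed


section \<open>Noetherian rings\<close>

lemma noeth_D:
  fixes I :: "nat \<Rightarrow> 'a::comm_ring_1 set"
  assumes "noetherian_ring TYPE('a)" "\<And>n. is_ideal (I n)" "mono I"
  shows "\<exists>N. \<forall>n\<ge>N. I n = I N"
proof -
  have "\<forall>I :: nat \<Rightarrow> 'a set. (\<forall>n. is_ideal (I n)) \<and> mono I \<longrightarrow> (\<exists>N. \<forall>n\<ge>N. I n = I N)"
    using assms(1) unfolding noetherian_ring_def by assumption
  then have "(\<forall>n. is_ideal (I n)) \<and> mono I \<longrightarrow> (\<exists>N. \<forall>n\<ge>N. I n = I N)" by (rule allE)
  then show ?thesis using assms(2,3) by blast
qed

lemma noeth_max: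
  fixes S :: "'a::comm_ring_1 set set"
  assumes "noetherian_ring TYPE('a)" "S \<noteq> {}" "\<forall>J\<in>S. is_ideal J"
  shows "\<exists>J\<in>S. \<forall>J'\<in>S. J \<subseteq> J' \<longrightarrow> J' = J"
proof (rule ccontr)
  assume "\<not> ?thesis"
  then have H: "\<forall>J\<in>S. \<exists>J'\<in>S. J \<subseteq> J' \<and> J' \<noteq> J" by blast
  define f where "f = rec_nat (SOME J. J \<in> S) (\<lambda>n J. SOME J'. J' \<in> S \<and> J \<subseteq> J' \<and> J' \<noteq> J)"
  have f0: "f 0 = (SOME J. J \<in> S)" and fS: "f (Suc n) = (SOME J'. J' \<in> S \<and> f n \<subseteq> J' \<and> J' \<noteq> f n)" for n
    by (simp_all add: f_def)
  have inS: "f n \<in> S" for n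
  proof (induction n)
    case 0 then show ?case unfolding f0 using assms(2) by (auto intro: someI)
  next
    case (Suc n)
    then obtain J' where "J' \<in> S \<and> f n \<subseteq> J' \<and> J' \<noteq> f n" using H by blast
    then show ?case unfolding fS by (rule someI2) auto
  qed
  have st: "f n \<subseteq> f (Suc n) \<and> f (Suc n) \<noteq> f n" for n
  proof -
    obtain J' where "J' \<in> S \<and> f n \<subseteq> J' \<and> J' \<noteq> f n" using H inS by blast
    then show ?thesis unfolding fS by (rule someI2) auto
  qed
  have "mono f" by (rule mono_iff_le_Suc[THEN iffD2]) (use st in auto)
  moreover have idl: "\<And>n. is_ideal (f n)" using inS assms(3) by auto
  ultimately obtain N where "\<forall>n\<ge>N. f n = f N" using noeth_D[of f, OF assms(1) idl] by blast

  then have "f (Suc N) = f N" by (meson le_SucI order_refl)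

  then show False using st[of N] by simp
qed

lemma noeth_fg:
  fixes I :: "'a::comm_ring_1 set"
  assumes "noetherian_ring TYPE('a)" "is_ideal I"
  shows "\<exists>gs. lspan gs = I"
proof -
  let ?S = "{lspan gs | gs. set gs \<subseteq> I}"
  have "lspan [] \<in> ?S" by (intro CollectI exI[of _ "[]"]) simp
  then have "?S \<noteq> {}" by blast

  moreover have "\<forall>J\<in>?S. is_ideal J" using is_ideal_lspan by auto
  ultimately have "\<exists>J\<in>?S. \<forall>J'\<in>?S. J \<subseteq> J' \<longrightarrow> J' = J" by (rule noeth_max[OF assms(1)])
  then obtain J where J: "J \<in> ?S" "\<forall>J'\<in>?S. J \<subseteq> J' \<longrightarrow> J' = J" by blast
  then obtain gs where gs: "J = lspan gs" "set gs \<subseteq> I" by auto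
  have "I \<subseteq> J"
  proof
    fix x assume x: "x \<in> I"
    then have "lspan (x # gs) \<in> ?S" using gs by (intro CollectI exI[of _ "x#gs"]) simp

    moreover have "J \<subseteq> lspan (x # gs)" using gs lspan_Cons_sub by blast
    ultimately have "lspan (x # gs) = J" using J(2) by blast
    then show "x \<in> J" using lspan_Cons_mem[of x gs] by simp

  qed
  moreover have "J \<subseteq> I" using gs lspan_subset[OF assms(2)] by auto
  ultimately show ?thesis using gs by auto
qed


locale R2 =
  fixes M :: "'a::idom set" and \<pi> \<delta> :: 'a and a b :: nat
  assumes noeth: "noetherian_ring TYPE('a)" and loc: "local_ring TYPE('a)"
    and maxM: "maximal_ideal M" and dim2: "krull_dim TYPE('a) = 2"
    and Mdef: "M = ideal2 \<pi> \<delta>" and apos: "a > 0" and bpos: "b > 0"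
begin

lemma M_ideal: "is_ideal M" using maxM unfolding maximal_ideal_def by blast
lemma one_notin_M: "1 \<notin> M" using maxM ideal_UNIV_iff[OF M_ideal] unfolding maximal_ideal_def by blast
lemma pi_in_M: "\<pi> \<in> M" using Mdef ideal2_mem1 by blast
lemma delta_in_M: "\<delta> \<in> M" using Mdef ideal2_mem2 by blast

lemma max_exists:
  fixes I :: "'a set"
  assumes "is_ideal I" "1 \<notin> I"
  shows "\<exists>J. maximal_ideal J \<and> I \<subseteq> J"
proof -
  let ?S = "{J. is_ideal J \<and> 1 \<notin> J \<and> I \<subseteq> J}"
  have "I \<in> ?S" using assms by blast
  then have "?S \<noteq> {}" by blast
  moreover have "\<forall>J\<in>?S. is_ideal J" by blast
  ultimately have "\<exists>J\<in>?S. \<forall>J'\<in>?S. J \<subseteq> J' \<longrightarrow> J' = J" by (rule noeth_max[OF noeth])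
  then obtain J where J: "J \<in> ?S" "\<forall>J'\<in>?S. J \<subseteq> J' \<longrightarrow> J' = J" by blast
  have "maximal_ideal J" unfolding maximal_ideal_def
  proof (intro conjI allI impI)
    show "is_ideal J" "J \<noteq> UNIV" using J by auto
    fix J' assume H: "is_ideal J' \<and> J \<subseteq> J'"
    show "J' = J \<or> J' = UNIV"
    proof (cases "1 \<in> J'")
      case True then show ?thesis using ideal_UNIV_iff H by blast
    next
      case False then have "J' \<in> ?S" using H J by blast
      then show ?thesis using J H by blast
    qed
  qed
  then show ?thesis using J by blast
qed

lemma maximal_eq_M: "maximal_ideal J \<Longrightarrow> J = M"
  using loc maxM unfolding local_ring_def by blast

lemma nonunit_in_M: assumes "\<not> x dvd 1" shows "x \<in> M"
proof -
  have "1 \<notin> {y. x dvd y}" using assms by simp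
  from max_exists[OF is_ideal_dvd this] obtain J where J: "maximal_ideal J" "{y. x dvd y} \<subseteq> J" by blast
  have "x \<in> {y. x dvd y}" by simp
  then show ?thesis using J maximal_eq_M[OF J(1)] by blast

qed

lemma unit_notin_M: assumes "x dvd 1" shows "x \<notin> M"
proof
  assume "x \<in> M"
  obtain w where "1 = x * w" using assms by (elim dvdE)
  moreover have "w * x \<in> M" using ideal_mult[OF M_ideal \<open>x \<in> M\<close>] by blast
  ultimately show False using one_notin_M by (simp add: mult.commute)
qed

lemma notin_M_iff: "x \<notin> M \<longleftrightarrow> x dvd 1"
  using nonunit_in_M unit_notin_M by blast

lemma proper_sub_M: "is_ideal (I :: 'a set) \<Longrightarrow> 1 \<notin> I \<Longrightarrow> I \<subseteq> M"

  using max_exists maximal_eq_M by blast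

lemma M_mem: "x \<in> M \<longleftrightarrow> (\<exists>r s. x = r * \<pi> + s * \<delta>)"
  unfolding Mdef ideal2_def by blast

lemma unit_one_minus: "x \<in> M \<Longrightarrow> (1 - c * x) dvd 1"
proof -
  assume x: "x \<in> M"
  have "1 - c * x \<notin> M"
  proof
    assume "1 - c * x \<in> M"
    then have "(1 - c * x) + c * x \<in> M" using ideal_add[OF M_ideal] ideal_mult[OF M_ideal x] by blast
    then show False using one_notin_M by simp
  qed
  then show ?thesis using notin_M_iff by blast
qed

lemma nakayama:
  assumes L: "is_ideal L" and x: "x \<in> M"
    and H: "\<forall>g\<in>lspan gs. \<exists>l\<in>L. \<exists>h\<in>lspan gs. g = l + x * h"
  shows "lspan gs \<subseteq> L"
  using H
proof (induction gs)
  case Nil then show ?case using ideal_0[OF L] by simp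
next
  case (Cons g gs)
  have "g \<in> lspan (g # gs)" by (rule lspan_Cons_mem)
  then obtain l h where lh: "l \<in> L" "h \<in> lspan (g # gs)" "g = l + x * h" using Cons.prems by blast
  then obtain c h' where h': "h = c * g + h'" "h' \<in> lspan gs" by auto
  have u: "(1 - c * x) dvd 1" by (rule unit_one_minus[OF x])
  obtain w' where "1 = (1 - c * x) * w'" using u by (elim dvdE)
  then have ww: "(1 - c * x) * w' = 1" by simp

  have e: "g = l + x * (c * g + h')" using lh(3) unfolding h'(1) .
  have "(1 - c * x) * g = g - x * (c * g)" by (simp add: algebra_simps)
  also have "\<dots> = (l + x * (c * g + h')) - x * (c * g)"
    by (rule arg_cong[where f="\<lambda>z. z - x * (c * g)", OF e])
  also have "\<dots> = l + x * h'" by (simp add: algebra_simps)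
  finally have e2: "(1 - c * x) * g = l + x * h'" .
  have "g = ((1 - c * x) * w') * g" using ww by simp
  also have "\<dots> = w' * ((1 - c * x) * g)" by (simp only: ac_simps)
  also have "\<dots> = w' * l + w' * x * h'" unfolding e2 by (simp add: algebra_simps)
  finally have gexp: "g = w' * l + w' * x * h'" .

  have "\<forall>g0\<in>lspan gs. \<exists>l\<in>L. \<exists>h\<in>lspan gs. g0 = l + x * h"
  proof
    fix g0 assume g0: "g0 \<in> lspan gs"
    then have "g0 \<in> lspan (g # gs)" using lspan_Cons_sub by blast
    then obtain l0 h0 where l0: "l0 \<in> L" "h0 \<in> lspan (g # gs)" "g0 = l0 + x * h0" using Cons.prems by blast
    then obtain c0 h0' where h0': "h0 = c0 * g + h0'" "h0' \<in> lspan gs" by auto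
    have "g0 = (l0 + x * c0 * w' * l) + x * (c0 * w' * x * h' + h0')"
      using l0(3) h0'(1) gexp by (simp add: algebra_simps)
    moreover have "l0 + x * c0 * w' * l \<in> L" using l0 lh ideal_add[OF L] ideal_mult[OF L] by simp
    moreover have "c0 * w' * x * h' + h0' \<in> lspan gs"
      by (rule ideal_add[OF is_ideal_lspan ideal_mult[OF is_ideal_lspan h'(2)] h0'(2)])
    ultimately show "\<exists>l\<in>L. \<exists>h\<in>lspan gs. g0 = l + x * h" by blast
  qed
  then have sub: "lspan gs \<subseteq> L" by (rule Cons.IH)
  have "h' \<in> L" using sub h' by blast
  then have gL: "g \<in> L"
    by (subst gexp) (rule ideal_add[OF L ideal_mult[OF L lh(1)] ideal_mult[OF L]])

  show ?case
  proof
    fix z assume "z \<in> lspan (g # gs)"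
    then obtain r k where zk: "z = r * g + k" "k \<in> lspan gs" by auto
    then have "k \<in> L" using sub by blast
    then show "z \<in> L" unfolding zk(1) by (rule ideal_add[OF L ideal_mult[OF L gL]])

  qed
qed

lemma prime_pow: "prime_ideal Q \<Longrightarrow> x ^ n \<in> Q \<Longrightarrow> x \<in> Q"
proof (induction n)
  case 0 then show ?case unfolding prime_ideal_def using ideal_UNIV_iff by auto
next
  case (Suc n) then show ?case unfolding prime_ideal_def by auto
qed

lemma enat_lt2: "(e::enat) < 2 \<Longrightarrow> e \<le> 1"
  by (cases e) (auto simp: one_enat_def numeral_eq_enat)

lemma dim_chain:
  obtains P :: "nat \<Rightarrow> 'a set" where "prime_ideal (P 0)" "prime_ideal (P 1)" "prime_ideal (P 2)"
    "P 0 \<subset> P 1" "P 1 \<subset> P 2"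
proof -
  let ?S = "{enat n | n. \<exists>P :: nat \<Rightarrow> 'a set. (\<forall>i\<le>n. prime_ideal (P i)) \<and> (\<forall>i<n. P i \<subset> P (Suc i))}"
  have S2: "Sup ?S = 2" using dim2 unfolding krull_dim_def .
  have "\<exists>e\<in>?S. 2 \<le> e"
  proof (rule ccontr)
    assume "\<not> (\<exists>e\<in>?S. 2 \<le> e)"
    then have "\<forall>e\<in>?S. e \<le> 1" using enat_lt2 by (meson not_le)
    then have "Sup ?S \<le> 1" by (intro Sup_least) blast
    then show False using S2 by (simp add: one_enat_def numeral_eq_enat)
  qed
  then obtain e where e: "e \<in> ?S" "2 \<le> e" by blast
  from e(1) obtain n where en: "e = enat n"
    and Pex: "\<exists>P :: nat \<Rightarrow> 'a set. (\<forall>i\<le>n. prime_ideal (P i)) \<and> (\<forall>i<n. P i \<subset> P (Suc i))"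
    by auto
  from Pex obtain P :: "nat \<Rightarrow> 'a set" where P: "\<forall>i\<le>n. prime_ideal (P i)" "\<forall>i<n. P i \<subset> P (Suc i)"
    by blast
  have n: "2 \<le> enat n" using e en by simp

  have "2 \<le> n" using n by (simp add: numeral_eq_enat)
  then show ?thesis using that[of P] P by (simp add: numeral_2_eq_2)
qed

lemma char_pow:
  fixes x y z :: 'a
  assumes J: "is_ideal J" and Mxy: "M = ideal2 x y" and lt: "\<forall>k<i. x ^ k \<notin> J" and z: "z \<in> J"
    and yJ: "y \<in> J"
  shows "\<exists>r t. z = x ^ i * r + y * t"
proof -
  have "k \<le> i \<Longrightarrow> \<exists>r t. z = x ^ k * r + y * t" for k
  proof (induction k)
    case 0 show ?case by (rule exI[of _ z], rule exI[of _ 0]) simp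
  next
    case (Suc k)
    then obtain r t where rt: "z = x ^ k * r + y * t" by auto
    have "r \<in> M"
    proof (rule ccontr)
      assume "r \<notin> M"
      then obtain r' where r': "1 = r * r'" using notin_M_iff by (auto elim: dvdE)
      have "x ^ k * r = z - y * t" using rt by simp
      also have "\<dots> \<in> J" by (rule ideal_diff[OF J z ideal_mult2[OF J yJ]])
      finally have "r' * (x ^ k * r) \<in> J" using ideal_mult[OF J] by blast
      moreover have "r' * (x ^ k * r) = x ^ k" using r' by (simp add: algebra_simps)
      ultimately show False using lt Suc by auto
    qed
    then obtain r1 r2 where "r = r1 * x + r2 * y" using Mxy unfolding ideal2_def by blast
    then have "z = x ^ Suc k * r1 + y * (t + x ^ k * r2)" using rt by (simp add: algebra_simps)
    then show ?case by blast
  qed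
  then show ?thesis by simp
qed

lemma pit_lite:
  fixes x y :: 'a and n :: nat
  assumes Mxy: "M = ideal2 x y" and dv: "y dvd x ^ n"
  shows False
proof -
  obtain P :: "nat \<Rightarrow> 'a set" where P: "prime_ideal (P 0)" "prime_ideal (P 1)" "prime_ideal (P 2)" "P 0 \<subset> P 1" "P 1 \<subset> P 2"
    by (rule dim_chain)
  define Q where "Q = P 1"
  have Qi: "is_ideal Q" and Q1: "1 \<notin> Q" and Qp: "\<And>u v. u * v \<in> Q \<Longrightarrow> u \<in> Q \<or> v \<in> Q"
    using P(2) ideal_UNIV_iff unfolding Q_def prime_ideal_def by auto
  obtain p where p: "p \<in> Q" "p \<noteq> 0"
  proof -
    obtain p where "p \<in> P 1" "p \<notin> P 0" using P(4) by blast
    moreover have "0 \<in> P 0" using P(1) ideal_0 unfolding prime_ideal_def by blast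
    ultimately show ?thesis using that unfolding Q_def by blast
  qed
  have P2M: "P 2 \<subseteq> M"
    using P(3) proper_sub_M ideal_UNIV_iff unfolding prime_ideal_def by blast
  have QM: "Q \<subseteq> M" "Q \<noteq> M" using P(5) P2M unfolding Q_def by auto
  have yM: "y \<in> M" and xM: "x \<in> M" using Mxy ideal2_mem1 ideal2_mem2 by auto
  have yQ: "y \<notin> Q"
  proof
    assume "y \<in> Q"
    then have "x ^ n \<in> Q" using dv ideal_mult2[OF Qi] by (auto elim: dvdE)
    then have "x \<in> Q" using prime_pow P(2) unfolding Q_def by blast
    then have "M \<subseteq> Q" using Mxy ideal2_least[OF Qi] \<open>y \<in> Q\<close> by simp
    then show False using QM by blast
  qed
  define Qm where "Qm m = {r. \<exists>s. s \<notin> Q \<and> p ^ m dvd s * r}" for m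
  have Qm_ideal: "is_ideal (Qm m)" for m
    unfolding is_ideal_def
  proof (intro conjI ballI allI)
    show "0 \<in> Qm m" unfolding Qm_def using Q1 by (auto intro!: exI[of _ 1])
    fix u v assume "u \<in> Qm m" "v \<in> Qm m"
    then obtain s1 s2 where s: "s1 \<notin> Q" "p ^ m dvd s1 * u" "s2 \<notin> Q" "p ^ m dvd s2 * v" unfolding Qm_def by blast
    have "s1 * s2 \<notin> Q" using s Qp by blast
    moreover have "p ^ m dvd (s1 * s2) * (u + v)"
    proof -
      have "(s1 * s2) * (u + v) = s2 * (s1 * u) + s1 * (s2 * v)" by (simp add: algebra_simps)
      then show ?thesis using s by (simp add: dvd_add dvd_mult)
    qed
    ultimately show "u + v \<in> Qm m" unfolding Qm_def by blast
  next
    fix r u assume "u \<in> Qm m"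
    then obtain s where s: "s \<notin> Q" "p ^ m dvd s * u" unfolding Qm_def by blast
    have "p ^ m dvd r * (s * u)" using s(2) by (rule dvd_mult)
    then have "p ^ m dvd s * (r * u)" by (simp add: ac_simps)

    then show "r * u \<in> Qm m" using s unfolding Qm_def by blast
  qed
  have Qm_dec: "Qm (Suc m) \<subseteq> Qm m" for m
  proof
    fix r assume "r \<in> Qm (Suc m)"
    then obtain s where s: "s \<notin> Q" "p ^ Suc m dvd s * r" unfolding Qm_def by blast
    have "p ^ m dvd p ^ Suc m" by (simp add: le_imp_power_dvd)
    then show "r \<in> Qm m" using s dvd_trans unfolding Qm_def by blast
  qed
  define J where "J m = {q + y * t | q t. q \<in> Qm m}" for m
  have J_ideal: "is_ideal (J m)" for m
    unfolding is_ideal_def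
  proof (intro conjI ballI allI)
    have "0 = 0 + y * 0" by simp
    then show "0 \<in> J m" unfolding J_def using ideal_0[OF Qm_ideal] by blast
    fix u v assume "u \<in> J m" "v \<in> J m"
    then obtain q1 t1 q2 t2 where "u = q1 + y * t1" "v = q2 + y * t2" "q1 \<in> Qm m" "q2 \<in> Qm m"
      unfolding J_def by blast
    moreover have "u + v = (q1 + q2) + y * (t1 + t2)" using calculation by (simp add: algebra_simps)
    ultimately show "u + v \<in> J m" unfolding J_def using ideal_add[OF Qm_ideal] by blast
  next
    fix r u assume "u \<in> J m"
    then obtain q t where "u = q + y * t" "q \<in> Qm m" unfolding J_def by blast
    moreover have "r * u = r * q + y * (r * t)" using calculation by (simp add: algebra_simps)
    ultimately show "r * u \<in> J m" unfolding J_def using ideal_mult[OF Qm_ideal] by blast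
  qed
  have yJ: "y \<in> J m" for m
  proof -
    have "y = 0 + y * 1" by simp
    then show ?thesis unfolding J_def using ideal_0[OF Qm_ideal] by blast
  qed
  have xJ: "x ^ n \<in> J m" for m
    using dv yJ ideal_mult2[OF J_ideal] by (auto elim: dvdE)
  have J_dec: "J (Suc m) \<subseteq> J m" for m
    unfolding J_def using Qm_dec by blast
  define ind where "ind m = (LEAST i. x ^ i \<in> J m)" for m
  have ind_in: "x ^ ind m \<in> J m" for m unfolding ind_def by (rule LeastI[of _ n]) (rule xJ)
  have ind_le: "ind m \<le> n" for m unfolding ind_def by (rule Least_le) (rule xJ)
  have ind_lt: "\<forall>k<ind m. x ^ k \<notin> J m" for m unfolding ind_def using not_less_Least by blast
  have ind_mono: "ind m \<le> ind (Suc m)" for m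
  proof -
    have "x ^ ind (Suc m) \<in> J m" using ind_in[of "Suc m"] J_dec[of m] by blast
    then show ?thesis unfolding ind_def[of m] by (rule Least_le)
  qed

  have "range ind \<subseteq> {..n}" using ind_le by blast
  then have fin: "finite (range ind)" using finite_subset finite_atMost by blast

  obtain m0 where m0: "ind m0 = Max (range ind)"
    using Max_in[OF fin] by auto
  have "ind (Suc m0) \<le> ind m0" using m0 Max_ge[OF fin] by simp
  then have eqi: "ind (Suc m0) = ind m0" using ind_mono[of m0] by simp
  have JJ: "J m0 \<subseteq> J (Suc m0)"
  proof
    fix z assume z: "z \<in> J m0"
    obtain r t where "z = x ^ ind m0 * r + y * t"
      using char_pow[OF J_ideal Mxy ind_lt z yJ] by blast

    moreover have "x ^ ind m0 \<in> J (Suc m0)" using ind_in[of "Suc m0"] eqi by simp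
    ultimately show "z \<in> J (Suc m0)"
      using ideal_add[OF J_ideal] ideal_mult2[OF J_ideal] yJ by simp
  qed
  obtain gs where gs: "lspan gs = Qm m0" using noeth_fg[OF noeth Qm_ideal] by blast
  have "\<forall>g\<in>lspan gs. \<exists>l\<in>Qm (Suc m0). \<exists>h\<in>lspan gs. g = l + y * h"
  proof
    fix g assume "g \<in> lspan gs"
    then have g: "g \<in> Qm m0" using gs by simp
    have "g \<in> J m0" unfolding J_def
    proof -
      have "g = g + y * 0" by simp
      then show "g \<in> {q + y * t |q t. q \<in> Qm m0}" using g by blast
    qed
    then have "g \<in> J (Suc m0)" using JJ by blast
    then obtain q t where qt: "g = q + y * t" "q \<in> Qm (Suc m0)" unfolding J_def by blast
    have "y * t = g - q" using qt by simp
    also have "\<dots> \<in> Qm m0" using ideal_diff[OF Qm_ideal g] qt Qm_dec by blast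
    finally obtain s where s: "s \<notin> Q" "p ^ m0 dvd s * (y * t)" unfolding Qm_def by blast
    have "s * y \<notin> Q" using s yQ Qp by blast
    moreover have "p ^ m0 dvd (s * y) * t" using s by (simp add: mult.assoc)
    ultimately have "t \<in> Qm m0" unfolding Qm_def by blast
    then show "\<exists>l\<in>Qm (Suc m0). \<exists>h\<in>lspan gs. g = l + y * h" using qt gs by blast
  qed
  from nakayama[OF Qm_ideal yM this] have sub: "Qm m0 \<subseteq> Qm (Suc m0)" using gs by simp
  have "p ^ m0 \<in> Qm m0" unfolding Qm_def using Q1 by (auto intro!: exI[of _ 1])
  then have "p ^ m0 \<in> Qm (Suc m0)" using sub by blast
  then obtain s where s: "s \<notin> Q" "p ^ Suc m0 dvd s * p ^ m0" unfolding Qm_def by blast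
  then obtain k where "s * p ^ m0 = p ^ Suc m0 * k" by (elim dvdE)
  then have "p ^ m0 * s = p ^ m0 * (p * k)" by (simp add: algebra_simps)
  then have "s = p * k" using p(2) by simp
  then have "s \<in> Q" using ideal_mult2[OF Qi p(1)] by simp
  then show False using s by blast
qed

lemma pi_not_rad: "\<not> \<delta> dvd \<pi> ^ n"
  using pit_lite[OF Mdef] by blast

lemma delta_not_rad: "\<not> \<pi> dvd \<delta> ^ n"
  using pit_lite[of \<delta> \<pi> n] Mdef ideal2_sym by blast

lemma pi_nz: "\<pi> \<noteq> 0" using pi_not_rad[of 1] by auto
lemma delta_nz: "\<delta> \<noteq> 0" using delta_not_rad[of 1] by auto

lemma unit_cancel_dvd: "u * w = 1 \<Longrightarrow> d dvd u * z \<Longrightarrow> d dvd (z::'a)"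
proof -
  assume uw: "u * w = 1" and d: "d dvd u * z"
  from d have "d dvd w * (u * z)" by (rule dvd_mult)

  moreover have "w * (u * z) = z" using uw by (metis mult.assoc mult.commute mult_1)
  ultimately show ?thesis by simp
qed

lemma notin_M_unit: "z \<notin> M \<Longrightarrow> \<exists>w. z * w = 1"
  using notin_M_iff by (metis dvdE)

lemma colon: assumes "\<delta> dvd \<pi> * s" shows "\<delta> dvd s"
proof -
  define A where "A n = {z. \<delta> dvd \<pi> ^ n * z}" for n
  have Ai: "is_ideal (A n)" for n
    unfolding is_ideal_def A_def by (auto simp: distrib_left dvd_add algebra_simps)
  have "mono A"
  proof (rule mono_iff_le_Suc[THEN iffD2], intro allI subsetI)
    fix n z assume "z \<in> A n"
    then have "\<delta> dvd \<pi> * (\<pi> ^ n * z)" unfolding A_def by (simp add: dvd_mult)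
    then show "z \<in> A (Suc n)" unfolding A_def by (simp add: algebra_simps)
  qed
  then obtain N where N: "\<forall>n\<ge>N. A n = A N" using noeth_D[of A, OF noeth Ai] by blast
  have step: "\<exists>sk. \<delta> dvd (s - \<pi> ^ k * sk) \<and> \<delta> dvd \<pi> ^ Suc k * sk" for k
  proof (induction k)
    case 0 show ?case using assms by (intro exI[of _ s]) simp
  next
    case (Suc k)
    then obtain sk where sk: "\<delta> dvd (s - \<pi> ^ k * sk)" "\<delta> dvd \<pi> ^ Suc k * sk" by blast
    have "sk \<in> M"
    proof (rule ccontr)
      assume "sk \<notin> M"
      then obtain w where w: "sk * w = 1" using notin_M_unit by blast
      have "\<delta> dvd sk * \<pi> ^ Suc k" using sk(2) by (simp add: mult.commute)
      then have "\<delta> dvd \<pi> ^ Suc k" by (rule unit_cancel_dvd[OF w])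
      then show False using pi_not_rad by blast
    qed
    then obtain r1 r2 where r: "sk = r1 * \<pi> + r2 * \<delta>" using M_mem by blast
    have e1: "s - \<pi> ^ Suc k * r1 = (s - \<pi> ^ k * sk) + \<delta> * (\<pi> ^ k * r2)" using r by (simp add: algebra_simps)
    have 1: "\<delta> dvd s - \<pi> ^ Suc k * r1" unfolding e1 by (rule dvd_add[OF sk(1)]) simp
    have e2: "\<pi> ^ Suc (Suc k) * r1 = \<pi> ^ Suc k * sk - \<delta> * (\<pi> ^ Suc k * r2)" using r by (simp add: algebra_simps)
    have 2: "\<delta> dvd \<pi> ^ Suc (Suc k) * r1" unfolding e2 by (rule dvd_diff[OF sk(2)]) simp

    show ?case using 1 2 by blast
  qed
  obtain sN where sN: "\<delta> dvd (s - \<pi> ^ N * sN)" "\<delta> dvd \<pi> ^ Suc N * sN" using step by blast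
  have "sN \<in> A (Suc N)" using sN(2) unfolding A_def by simp
  then have "sN \<in> A N" using N by (metis le_SucI order_refl)
  then have "\<delta> dvd \<pi> ^ N * sN" unfolding A_def by simp
  then have "\<delta> dvd (s - \<pi> ^ N * sN) + \<pi> ^ N * sN" using sN(1) by (rule dvd_add[rotated])
  then show ?thesis by simp
qed

lemma colon_pow: "\<delta> dvd \<pi> ^ i * s \<Longrightarrow> \<delta> dvd s"
proof (induction i arbitrary: s)
  case (Suc i)
  have "\<pi> ^ Suc i * s = \<pi> ^ i * (\<pi> * s)" by (simp add: algebra_simps)
  then have "\<delta> dvd \<pi> ^ i * (\<pi> * s)" using Suc.prems by metis


  then have "\<delta> dvd \<pi> * s" by (rule Suc.IH)
  then show ?case by (rule colon)
qed simp

lemma krull_mod_delta: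
  assumes H: "\<forall>n. \<exists>y. \<delta> dvd g - \<pi> ^ n * y"
  shows "\<delta> dvd g"
proof -
  obtain Y where Y: "\<forall>n. \<delta> dvd g - \<pi> ^ n * Y n" using choice[OF H] by blast
  have Ystep: "\<delta> dvd Y n - \<pi> * Y (Suc n)" for n
  proof -
    have e: "\<pi> ^ n * (Y n - \<pi> * Y (Suc n)) = (g - \<pi> ^ Suc n * Y (Suc n)) - (g - \<pi> ^ n * Y n)"
      by (simp add: algebra_simps)
    have "\<delta> dvd \<pi> ^ n * (Y n - \<pi> * Y (Suc n))" unfolding e using Y by (blast intro: dvd_diff)

    then show ?thesis by (rule colon_pow)
  qed
  define B where "B n = {c * Y n + \<delta> * t | c t. True}" for n
  have Bi: "is_ideal (B n)" for n
    unfolding is_ideal_def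
  proof (intro conjI ballI allI)
    have "0 = 0 * Y n + \<delta> * 0" by simp
    then show "0 \<in> B n" unfolding B_def by blast
    fix u v assume "u \<in> B n" "v \<in> B n"
    then obtain c1 t1 c2 t2 where "u = c1 * Y n + \<delta> * t1" "v = c2 * Y n + \<delta> * t2" unfolding B_def by blast
    then have "u + v = (c1 + c2) * Y n + \<delta> * (t1 + t2)" by (simp add: algebra_simps)
    then show "u + v \<in> B n" unfolding B_def by blast
  next
    fix r u assume "u \<in> B n"
    then obtain c t where "u = c * Y n + \<delta> * t" unfolding B_def by blast
    then have "r * u = (r * c) * Y n + \<delta> * (r * t)" by (simp add: algebra_simps)
    then show "r * u \<in> B n" unfolding B_def by blast
  qed
  have "mono B"
  proof (rule mono_iff_le_Suc[THEN iffD2], intro allI subsetI)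
    fix n z assume "z \<in> B n"
    then obtain c t where z: "z = c * Y n + \<delta> * t" unfolding B_def by blast
    obtain k where k: "Y n - \<pi> * Y (Suc n) = \<delta> * k" using Ystep by (blast elim: dvdE)
    have "z = (c * \<pi>) * Y (Suc n) + \<delta> * (c * k + t)"
    proof -
      have "Y n = \<pi> * Y (Suc n) + \<delta> * k" using k by (simp add: algebra_simps)
      then show ?thesis using z by (simp add: algebra_simps)
    qed
    then show "z \<in> B (Suc n)" unfolding B_def by blast
  qed
  then obtain N where N: "\<forall>n\<ge>N. B n = B N" using noeth_D[of B, OF noeth Bi] by blast
  have "Y (Suc N) \<in> B (Suc N)"
  proof -
    have "Y (Suc N) = 1 * Y (Suc N) + \<delta> * 0" by simp
    then show ?thesis unfolding B_def by blast
  qed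
  then have "Y (Suc N) \<in> B N" using N by (metis le_SucI order_refl)
  then obtain c t where ct: "Y (Suc N) = c * Y N + \<delta> * t" unfolding B_def by blast
  obtain k where k: "Y N - \<pi> * Y (Suc N) = \<delta> * k" using Ystep by (blast elim: dvdE)
  have "(1 - c * \<pi>) * Y (Suc N) = \<delta> * (c * k + t)"
  proof -
    have "Y N = \<pi> * Y (Suc N) + \<delta> * k" using k by (simp add: algebra_simps)
    then have "Y (Suc N) = c * (\<pi> * Y (Suc N) + \<delta> * k) + \<delta> * t" using ct by simp
    then show ?thesis by (simp add: algebra_simps)
  qed
  then have d1: "\<delta> dvd (1 - c * \<pi>) * Y (Suc N)" by simp
  obtain w where w: "(1 - c * \<pi>) * w = 1" using unit_one_minus[OF pi_in_M, of c] by (metis dvdE)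
  have dY: "\<delta> dvd Y (Suc N)" by (rule unit_cancel_dvd[OF w d1])
  have "Y N = (Y N - \<pi> * Y (Suc N)) + \<pi> * Y (Suc N)" by simp
  then have dYN: "\<delta> dvd Y N" using Ystep[of N] dY by (metis dvd_add dvd_mult)
  have "g = (g - \<pi> ^ N * Y N) + \<pi> ^ N * Y N" by simp
  then show ?thesis using Y dYN by (metis dvd_add dvd_mult)
qed

lemma delta_adic: assumes "\<forall>n. \<delta> ^ n dvd x" shows "x = 0"
proof -
  have "\<forall>n. \<exists>z. x = \<delta> ^ n * z" using assms unfolding dvd_def by blast
  then obtain Z where Z: "\<forall>n. x = \<delta> ^ n * Z n" by metis
  have Zs: "Z n = \<delta> * Z (Suc n)" for n
  proof -
    have "\<delta> ^ n * Z n = \<delta> ^ n * (\<delta> * Z (Suc n))" using Z by (metis mult.assoc power_Suc2)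
    then show ?thesis using delta_nz by simp
  qed
  define C where "C n = {y. Z n dvd y}" for n
  have Ci: "is_ideal (C n)" for n unfolding C_def by (rule is_ideal_dvd)
  have "mono C"
  proof (rule mono_iff_le_Suc[THEN iffD2], intro allI subsetI)
    fix n y assume "y \<in> C n"
    then have "Z n dvd y" unfolding C_def by simp
    moreover have "Z (Suc n) dvd Z n" using Zs[of n] by (metis dvd_triv_right)
    ultimately show "y \<in> C (Suc n)" unfolding C_def using dvd_trans by blast
  qed

  then obtain N where N: "\<forall>n\<ge>N. C n = C N" using noeth_D[of C, OF noeth Ci] by blast
  have "Z (Suc N) \<in> C (Suc N)" unfolding C_def by simp
  then have "Z (Suc N) \<in> C N" using N by (metis le_SucI order_refl)
  then obtain c where "Z (Suc N) = Z N * c" unfolding C_def by (blast elim: dvdE)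
  then have "Z (Suc N) = (c * \<delta>) * Z (Suc N)" using Zs[of N] by (simp add: algebra_simps)
  then have "(1 - c * \<delta>) * Z (Suc N) = 0" by (simp add: algebra_simps)
  moreover have "1 - c * \<delta> \<noteq> 0" using unit_one_minus[OF delta_in_M, of c] by auto
  ultimately have "Z (Suc N) = 0" by simp
  then show ?thesis using Z[rule_format, of "Suc N"] by simp

qed

end


definition gen_ideal :: "'a::comm_ring_1 set \<Rightarrow> 'a set" where
  "gen_ideal G = \<Inter>{I. is_ideal I \<and> G \<subseteq> I}"

lemma gen_ideal_ideal: "is_ideal (gen_ideal G)"
  unfolding gen_ideal_def is_ideal_def by blast

lemma gen_ideal_gen: "G \<subseteq> gen_ideal G"
  unfolding gen_ideal_def by blast

lemma gen_ideal_least: "is_ideal S \<Longrightarrow> G \<subseteq> S \<Longrightarrow> gen_ideal G \<subseteq> S"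
  unfolding gen_ideal_def by blast

context R2
begin

definition pw :: "nat \<Rightarrow> nat \<Rightarrow> nat" where
  "pw n j = (n - b * j + a - 1) div a"

lemma pw_ge: "n \<le> a * pw n j + b * j"
proof -
  have "n - b * j \<le> a * ((n - b * j + a - 1) div a)"
  proof -
    have "(n - b * j + a - 1) = a * ((n - b * j + a - 1) div a) + (n - b * j + a - 1) mod a"
      by simp
    moreover have "(n - b * j + a - 1) mod a < a" using apos by simp
    ultimately show ?thesis by linarith
  qed
  then show ?thesis unfolding pw_def by linarith
qed

lemma divh: "c < a \<Longrightarrow> (a * i + c) div a = i"
proof -
  assume c: "c < a"
  have "(c + i * a) div a = i + c div a" using apos by simp

  then show ?thesis using c by (simp add: add.commute mult.commute)
qed

lemma pw_le: assumes "n \<le> a * i + b * j" shows "pw n j \<le> i"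
proof -
  have "n - b * j + a - 1 \<le> a * i + (a - 1)" using assms by linarith
  then have "(n - b * j + a - 1) div a \<le> (a * i + (a - 1)) div a" by (rule div_le_mono)
  also have "\<dots> = i" using apos by (intro divh) simp
  finally show ?thesis unfolding pw_def .
qed

lemma pw_shift: "j \<ge> 1 \<Longrightarrow> pw n j = pw (n - b) (j - 1)"
proof -
  assume "j \<ge> 1"
  then have "b * j = b + b * (j - 1)" by (cases j) auto
  then have "n - b * j = n - b - b * (j - 1)" by simp

  then show ?thesis unfolding pw_def by simp
qed

lemma pw_0_mult: "pw (a * i) 0 = i"
proof -
  have "a * i - b * 0 + a - 1 = a * i + (a - 1)" using apos by simp
  then show ?thesis unfolding pw_def using apos divh[of "a - 1" i] by simp

qed

lemma pw_0_mult1: "pw (a * i + 1) 0 = Suc i"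
proof -
  have "a * i + 1 - b * 0 + a - 1 = a * Suc i" using apos by simp
  then show ?thesis unfolding pw_def using apos divh[of 0 "Suc i"] by simp
qed


definition Iw :: "nat \<Rightarrow> 'a set" where
  "Iw n = gen_ideal {\<pi> ^ pw n j * \<delta> ^ j | j. True}"

lemma Iw_ideal: "is_ideal (Iw n)" unfolding Iw_def by (rule gen_ideal_ideal)

lemma Iw_gen: "\<pi> ^ pw n j * \<delta> ^ j \<in> Iw n"
proof -
  have "\<pi> ^ pw n j * \<delta> ^ j \<in> {\<pi> ^ pw n j * \<delta> ^ j | j. True}" by blast
  then show ?thesis unfolding Iw_def by (rule subsetD[OF gen_ideal_gen])
qed


lemma Iw_least: "is_ideal S \<Longrightarrow> (\<And>j. \<pi> ^ pw n j * \<delta> ^ j \<in> S) \<Longrightarrow> Iw n \<subseteq> S"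
  unfolding Iw_def by (rule gen_ideal_least) auto

lemma Iw_mono: "\<pi> ^ i * \<delta> ^ j \<in> Iw n" if "n \<le> a * i + b * j"
proof -
  have "pw n j \<le> i" using pw_le[OF that] .
  then have e: "\<pi> ^ i = \<pi> ^ (i - pw n j) * \<pi> ^ (pw n j)" by (simp add: power_add[symmetric])
  have eq: "\<pi> ^ i * \<delta> ^ j = \<pi> ^ (i - pw n j) * (\<pi> ^ pw n j * \<delta> ^ j)"
    by (subst e) (simp add: mult.assoc)
  show ?thesis unfolding eq by (rule ideal_mult[OF Iw_ideal Iw_gen])

qed

lemma Iw_anti: "m \<le> n \<Longrightarrow> Iw n \<subseteq> Iw m"
proof (rule Iw_least[OF Iw_ideal], rule Iw_mono)
  fix j assume "m \<le> n" then show "m \<le> a * pw n j + b * j" using pw_ge[of n j] by linarith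
qed


lemma Iw_0: "Iw 0 = UNIV"
proof -
  have "1 \<in> Iw 0" using Iw_mono[of 0 0 0] by simp
  then show ?thesis using ideal_UNIV_iff[OF Iw_ideal] by blast
qed

lemma Iw_pi: "\<pi> \<in> Iw a" using Iw_mono[of a 1 0] by simp
lemma Iw_delta: "\<delta> \<in> Iw b" using Iw_mono[of b 0 1] by simp

lemma Iw_mult: assumes "x \<in> Iw n" "y \<in> Iw m" shows "x * y \<in> Iw (n + m)"
proof -
  have gg: "\<pi> ^ pw n j * \<delta> ^ j * (\<pi> ^ pw m j' * \<delta> ^ j') \<in> Iw (n + m)" for j j'
  proof -
    have "\<pi> ^ pw n j * \<delta> ^ j * (\<pi> ^ pw m j' * \<delta> ^ j') = \<pi> ^ (pw n j + pw m j') * \<delta> ^ (j + j')"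
      by (simp add: power_add algebra_simps)
    moreover have "n + m \<le> a * (pw n j + pw m j') + b * (j + j')"
      using pw_ge[of n j] pw_ge[of m j'] by (simp add: algebra_simps)
    ultimately show ?thesis using Iw_mono by simp
  qed
  have "\<pi> ^ pw n j * \<delta> ^ j * y \<in> Iw (n + m)" for j
  proof -
    have "is_ideal {y. \<pi> ^ pw n j * \<delta> ^ j * y \<in> Iw (n + m)}"
      unfolding is_ideal_def using ideal_add[OF Iw_ideal] ideal_mult[OF Iw_ideal] ideal_0[OF Iw_ideal]
      by (simp add: distrib_left mult.left_commute)
    then have "Iw m \<subseteq> {y. \<pi> ^ pw n j * \<delta> ^ j * y \<in> Iw (n + m)}"
      by (rule Iw_least) (use gg in simp)
    then show ?thesis using assms(2) by blast
  qed
  moreover have "is_ideal {x. x * y \<in> Iw (n + m)}"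
    unfolding is_ideal_def using ideal_add[OF Iw_ideal] ideal_mult[OF Iw_ideal] ideal_0[OF Iw_ideal]
    by (simp add: distrib_right mult.assoc)
  ultimately have "Iw n \<subseteq> {x. x * y \<in> Iw (n + m)}" by (intro Iw_least) auto
  then show ?thesis using assms(1) by blast
qed

lemma Iw_sub_M: "n \<ge> 1 \<Longrightarrow> Iw n \<subseteq> M"
proof (rule Iw_least[OF M_ideal])
  fix j assume n: "n \<ge> 1"
  show "\<pi> ^ pw n j * \<delta> ^ j \<in> M"
  proof (cases j)
    case 0
    then have "pw n j \<ge> 1" using pw_ge[of n j] n by (cases "pw n j") auto
    then obtain k where k: "pw n j = Suc k" by (cases "pw n j") auto
    have eq: "\<pi> ^ pw n j * \<delta> ^ j = (\<pi> ^ k * \<delta> ^ j) * \<pi>" unfolding k by (simp add: algebra_simps)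
    show ?thesis unfolding eq by (rule ideal_mult[OF M_ideal pi_in_M])
  next
    case (Suc j')
    then have eq: "\<pi> ^ pw n j * \<delta> ^ j = (\<pi> ^ pw n j * \<delta> ^ j') * \<delta>" by (simp add: algebra_simps)
    show ?thesis unfolding eq by (rule ideal_mult[OF M_ideal delta_in_M])

  qed
qed

lemma Iw_1: "Iw 1 = M"
proof
  show "Iw 1 \<subseteq> M" by (rule Iw_sub_M) simp
  show "M \<subseteq> Iw 1" unfolding Mdef
    by (rule ideal2_least[OF Iw_ideal]) (use Iw_mono[of 1 1 0] Iw_mono[of 1 0 1] apos bpos in auto)
qed

lemma Iw_split0: "Iw n \<subseteq> {\<pi> ^ pw n 0 * r + \<delta> * t | r t. True}"
proof (rule Iw_least)
  show "is_ideal {\<pi> ^ pw n 0 * r + \<delta> * t | r t. True}"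
    unfolding is_ideal_def
  proof (intro conjI ballI allI)
    have "0 = \<pi> ^ pw n 0 * 0 + \<delta> * 0" by simp
    then show "0 \<in> {\<pi> ^ pw n 0 * r + \<delta> * t | r t. True}" by blast
    fix u v assume "u \<in> {\<pi> ^ pw n 0 * r + \<delta> * t | r t. True}" "v \<in> {\<pi> ^ pw n 0 * r + \<delta> * t | r t. True}"
    then obtain r1 t1 r2 t2 where "u = \<pi> ^ pw n 0 * r1 + \<delta> * t1" "v = \<pi> ^ pw n 0 * r2 + \<delta> * t2" by blast
    then have "u + v = \<pi> ^ pw n 0 * (r1 + r2) + \<delta> * (t1 + t2)" by (simp add: algebra_simps)
    then show "u + v \<in> {\<pi> ^ pw n 0 * r + \<delta> * t | r t. True}" by blast
  next
    fix c u assume "u \<in> {\<pi> ^ pw n 0 * r + \<delta> * t | r t. True}"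
    then obtain r t where "u = \<pi> ^ pw n 0 * r + \<delta> * t" by blast
    then have "c * u = \<pi> ^ pw n 0 * (c * r) + \<delta> * (c * t)" by (simp add: algebra_simps)
    then show "c * u \<in> {\<pi> ^ pw n 0 * r + \<delta> * t | r t. True}" by blast
  qed
  fix j
  show "\<pi> ^ pw n j * \<delta> ^ j \<in> {\<pi> ^ pw n 0 * r + \<delta> * t | r t. True}"
  proof (cases j)
    case 0
    have "\<pi> ^ pw n j * \<delta> ^ j = \<pi> ^ pw n 0 * 1 + \<delta> * 0" using 0 by simp
    then show ?thesis by blast
  next
    case (Suc j')
    have "\<pi> ^ pw n j * \<delta> ^ j = \<pi> ^ pw n 0 * 0 + \<delta> * (\<pi> ^ pw n j * \<delta> ^ j')" using Suc by (simp add: algebra_simps)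
    then show ?thesis by blast
  qed
qed

lemma Iw_split: "Iw n \<subseteq> {\<pi> ^ pw n 0 * r + \<delta> * x' | r x'. x' \<in> Iw (n - b)}"
proof (rule Iw_least)
  let ?S = "{\<pi> ^ pw n 0 * r + \<delta> * x' | r x'. x' \<in> Iw (n - b)}"
  show "is_ideal ?S"
    unfolding is_ideal_def
  proof (intro conjI ballI allI)
    have "0 = \<pi> ^ pw n 0 * 0 + \<delta> * 0" by simp
    then show "0 \<in> ?S" using ideal_0[OF Iw_ideal] by blast
    fix u v assume "u \<in> ?S" "v \<in> ?S"
    then obtain r1 t1 r2 t2 where "u = \<pi> ^ pw n 0 * r1 + \<delta> * t1" "v = \<pi> ^ pw n 0 * r2 + \<delta> * t2"
      "t1 \<in> Iw (n - b)" "t2 \<in> Iw (n - b)" by blast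
    moreover have "u + v = \<pi> ^ pw n 0 * (r1 + r2) + \<delta> * (t1 + t2)" using calculation by (simp add: algebra_simps)
    ultimately show "u + v \<in> ?S" using ideal_add[OF Iw_ideal] by blast
  next
    fix c u assume "u \<in> ?S"
    then obtain r t where "u = \<pi> ^ pw n 0 * r + \<delta> * t" "t \<in> Iw (n - b)" by blast
    moreover have "c * u = \<pi> ^ pw n 0 * (c * r) + \<delta> * (c * t)" using calculation by (simp add: algebra_simps)
    ultimately show "c * u \<in> ?S" using ideal_mult[OF Iw_ideal] by blast
  qed
  fix j
  show "\<pi> ^ pw n j * \<delta> ^ j \<in> ?S"
  proof (cases j)
    case 0
    have "\<pi> ^ pw n j * \<delta> ^ j = \<pi> ^ pw n 0 * 1 + \<delta> * 0" using 0 by simp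
    then show ?thesis using ideal_0[OF Iw_ideal] by blast
  next
    case (Suc j')
    have "pw n j = pw (n - b) j'" using pw_shift[of j n] Suc by simp
    then have "\<pi> ^ pw n j * \<delta> ^ j = \<pi> ^ pw n 0 * 0 + \<delta> * (\<pi> ^ pw (n - b) j' * \<delta> ^ j')"
      using Suc by (simp add: algebra_simps)
    then show ?thesis using Iw_gen by blast
  qed
qed

lemma colon_Iw: assumes "\<delta> * x \<in> Iw (m + b)" shows "x \<in> Iw m"
proof -
  let ?p = "pw (m + b) 0"
  let ?S = "{\<delta> * x' + \<pi> ^ ?p * t | x' t. x' \<in> Iw m}"
  have "Iw (m + b) \<subseteq> ?S"
  proof (rule Iw_least)
    show "is_ideal ?S"
      unfolding is_ideal_def
    proof (intro conjI ballI allI)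
      have "0 = \<delta> * 0 + \<pi> ^ ?p * 0" by simp
      then show "0 \<in> ?S" using ideal_0[OF Iw_ideal] by blast
      fix u v assume "u \<in> ?S" "v \<in> ?S"
      then obtain r1 t1 r2 t2 where "u = \<delta> * r1 + \<pi> ^ ?p * t1" "v = \<delta> * r2 + \<pi> ^ ?p * t2"
        "r1 \<in> Iw m" "r2 \<in> Iw m" by blast
      moreover have "u + v = \<delta> * (r1 + r2) + \<pi> ^ ?p * (t1 + t2)" using calculation by (simp add: algebra_simps)
      ultimately show "u + v \<in> ?S" using ideal_add[OF Iw_ideal] by blast
    next
      fix c u assume "u \<in> ?S"
      then obtain r t where "u = \<delta> * r + \<pi> ^ ?p * t" "r \<in> Iw m" by blast
      moreover have "c * u = \<delta> * (c * r) + \<pi> ^ ?p * (c * t)" using calculation by (simp add: algebra_simps)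
      ultimately show "c * u \<in> ?S" using ideal_mult[OF Iw_ideal] by blast
    qed
    fix j
    show "\<pi> ^ pw (m + b) j * \<delta> ^ j \<in> ?S"
    proof (cases j)
      case 0
      have "\<pi> ^ pw (m + b) j * \<delta> ^ j = \<delta> * 0 + \<pi> ^ ?p * 1" using 0 by simp
      then show ?thesis using ideal_0[OF Iw_ideal] by blast
    next
      case (Suc j')
      have "pw (m + b) j = pw m j'" using pw_shift[of j "m + b"] Suc by simp
      then have "\<pi> ^ pw (m + b) j * \<delta> ^ j = \<delta> * (\<pi> ^ pw m j' * \<delta> ^ j') + \<pi> ^ ?p * 0"
        using Suc by (simp add: algebra_simps)
      then show ?thesis using Iw_gen by blast
    qed
  qed
  then obtain x' t where xt: "\<delta> * x = \<delta> * x' + \<pi> ^ ?p * t" "x' \<in> Iw m" using assms by blast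
  have "\<delta> dvd \<pi> ^ ?p * t"
  proof -
    have "\<pi> ^ ?p * t = \<delta> * (x - x')" using xt(1) by (simp add: algebra_simps)
    then show ?thesis by simp
  qed
  then obtain t' where t': "t = \<delta> * t'" using colon_pow by (blast elim: dvdE)
  have "\<delta> * x = \<delta> * (x' + \<pi> ^ ?p * t')" using xt(1) t' by (simp add: algebra_simps)
  then have xe: "x = x' + \<pi> ^ ?p * t'" using delta_nz by simp
  have "m \<le> a * ?p + b * 0" using pw_ge[of "m + b" 0] by simp
  then have "\<pi> ^ ?p \<in> Iw m" using Iw_mono[of m ?p 0] by simp
  then show ?thesis unfolding xe using ideal_add[OF Iw_ideal xt(2)] ideal_mult2[OF Iw_ideal] by blast
qed

lemma colon_Iw_pow: "\<delta> ^ e * z \<in> Iw (m + b * e) \<Longrightarrow> z \<in> Iw m"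
proof (induction e arbitrary: z)
  case (Suc e)
  have "\<delta> * (\<delta> ^ e * z) \<in> Iw ((m + b * e) + b)" using Suc.prems by (simp add: algebra_simps)
  then have "\<delta> ^ e * z \<in> Iw (m + b * e)" by (rule colon_Iw)
  then show ?case by (rule Suc.IH)
qed simp

definition LD :: "'a \<Rightarrow> nat \<Rightarrow> nat \<Rightarrow> nat \<Rightarrow> bool" where
  "LD x n e i \<longleftrightarrow> x \<in> Iw n \<and> a * i + b * e = n \<and>
     (\<exists>z u. u \<notin> M \<and> \<delta> dvd (z - u * \<pi> ^ i) \<and> x - \<delta> ^ e * z \<in> Iw (Suc n))"

lemma Iw_Suc_sub: "Iw (Suc n) \<subseteq> Iw n" by (rule Iw_anti) simp

lemma L1: "x \<in> Iw n \<Longrightarrow> x \<notin> Iw (Suc n) \<Longrightarrow> \<exists>e i. LD x n e i"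
proof (induction n arbitrary: x rule: less_induct)
  case (less n)
  let ?p = "pw n 0"
  obtain r x' where rx: "x = \<pi> ^ ?p * r + \<delta> * x'" "x' \<in> Iw (n - b)" using Iw_split less.prems(1) by blast
  show ?case
  proof (cases "a * ?p = n \<and> r \<notin> M")
    case True
    have d1: "\<delta> dvd (x - r * \<pi> ^ ?p)" using rx(1) by (simp add: algebra_simps)
    have d2: "x - \<delta> ^ 0 * x \<in> Iw (Suc n)" using ideal_0[OF Iw_ideal] by simp
    have "\<exists>z u. u \<notin> M \<and> \<delta> dvd (z - u * \<pi> ^ ?p) \<and> x - \<delta> ^ 0 * z \<in> Iw (Suc n)"
      using d1 d2 True by blast
    then have "LD x n 0 ?p" unfolding LD_def using True less.prems(1) by simp

    then show ?thesis by blast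
  next
    case False
    have rp: "\<pi> ^ ?p * r \<in> Iw (Suc n)"
    proof (cases "a * ?p = n")
      case True
      then have "r \<in> M" using False by blast
      then obtain r1 r2 where r: "r = r1 * \<pi> + r2 * \<delta>" using M_mem by blast
      have "\<pi> ^ Suc ?p * \<delta> ^ 0 \<in> Iw (Suc n)" using True apos by (intro Iw_mono) simp
      moreover have "\<pi> ^ ?p * \<delta> ^ 1 \<in> Iw (Suc n)" using True bpos by (intro Iw_mono) simp
      moreover have "\<pi> ^ ?p * r = r1 * (\<pi> ^ Suc ?p * \<delta> ^ 0) + r2 * (\<pi> ^ ?p * \<delta> ^ 1)"
        using r by (simp add: algebra_simps)
      ultimately show ?thesis using ideal_add[OF Iw_ideal] ideal_mult[OF Iw_ideal] by simp
    next
      case False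
      then have "Suc n \<le> a * ?p + b * 0" using pw_ge[of n 0] by simp
      then have "\<pi> ^ ?p * \<delta> ^ 0 \<in> Iw (Suc n)" by (rule Iw_mono)
      then show ?thesis using ideal_mult2[OF Iw_ideal] by simp
    qed
    have dx: "\<delta> * x' \<notin> Iw (Suc n)"
    proof
      assume "\<delta> * x' \<in> Iw (Suc n)"
      then have "x \<in> Iw (Suc n)" using rx(1) rp ideal_add[OF Iw_ideal] by simp
      then show False using less.prems(2) by blast
    qed
    have nb: "b \<le> n"
    proof (rule ccontr)
      assume "\<not> b \<le> n"
      then have "\<pi> ^ 0 * \<delta> ^ 1 \<in> Iw (Suc n)" by (intro Iw_mono) simp
      then have "\<delta> * x' \<in> Iw (Suc n)" using ideal_mult2[OF Iw_ideal] by simp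
      then show False using dx by blast
    qed
    have x'n: "x' \<notin> Iw (Suc (n - b))"
    proof
      assume "x' \<in> Iw (Suc (n - b))"
      then have "\<delta> * x' \<in> Iw (b + Suc (n - b))" using Iw_mult[OF Iw_delta] by blast
      then show False using dx nb by (simp add: Suc_diff_le)
    qed
    have "n - b < n" using nb bpos by simp
    from less.IH[OF this rx(2) x'n] obtain e i where ld: "LD x' (n - b) e i" by blast
    then obtain z u where zu: "u \<notin> M" "\<delta> dvd (z - u * \<pi> ^ i)" "x' - \<delta> ^ e * z \<in> Iw (Suc (n - b))"
      and w: "a * i + b * e = n - b" unfolding LD_def by blast
    have "x - \<delta> ^ Suc e * z = \<pi> ^ ?p * r + \<delta> * (x' - \<delta> ^ e * z)" using rx(1) by (simp add: algebra_simps)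
    moreover have "\<delta> * (x' - \<delta> ^ e * z) \<in> Iw (Suc n)"
      using Iw_mult[OF Iw_delta zu(3)] nb by (simp add: Suc_diff_le)
    ultimately have "x - \<delta> ^ Suc e * z \<in> Iw (Suc n)" using rp ideal_add[OF Iw_ideal] by simp
    moreover have "a * i + b * Suc e = n" using w nb by simp
    ultimately have "LD x n (Suc e) i" unfolding LD_def using zu less.prems(1) by blast
    then show ?thesis by blast
  qed
qed

lemma L2: assumes "LD x n e i" shows "x \<notin> Iw (Suc n)"
proof
  assume xin: "x \<in> Iw (Suc n)"
  obtain z u where zu: "u \<notin> M" "\<delta> dvd (z - u * \<pi> ^ i)" "x - \<delta> ^ e * z \<in> Iw (Suc n)"
    and w: "a * i + b * e = n" using assms unfolding LD_def by blast
  have "\<delta> ^ e * z = x - (x - \<delta> ^ e * z)" by simp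
  also have "\<dots> \<in> Iw (Suc n)" using ideal_diff[OF Iw_ideal xin zu(3)] .
  finally have "\<delta> ^ e * z \<in> Iw ((a * i + 1) + b * e)" using w by simp
  then have "z \<in> Iw (a * i + 1)" by (rule colon_Iw_pow)
  then obtain r t where rt: "z = \<pi> ^ Suc i * r + \<delta> * t" using Iw_split0[of "a * i + 1"] pw_0_mult1 by auto
  obtain s where s: "z - u * \<pi> ^ i = \<delta> * s" using zu(2) by (blast elim: dvdE)
  have "\<pi> ^ i * (u - \<pi> * r) = \<delta> * (t - s)" using rt s by (simp add: algebra_simps)
  then have "\<delta> dvd \<pi> ^ i * (u - \<pi> * r)" by simp
  then have "\<delta> dvd u - \<pi> * r" by (rule colon_pow)
  then have "u - \<pi> * r \<in> M" using ideal_mult2[OF M_ideal delta_in_M] by (auto elim: dvdE)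
  moreover have "\<pi> * r \<in> M" by (rule ideal_mult2[OF M_ideal pi_in_M])
  ultimately have "(u - \<pi> * r) + \<pi> * r \<in> M" by (rule ideal_add[OF M_ideal])
  then show False using zu(1) by simp

qed

lemma L3: assumes "LD x n e i" "LD y m e' i'" shows "LD (x * y) (n + m) (e + e') (i + i')"
proof -
  obtain z u where zu: "u \<notin> M" "\<delta> dvd (z - u * \<pi> ^ i)" "x - \<delta> ^ e * z \<in> Iw (Suc n)"
    and w: "a * i + b * e = n" and xI: "x \<in> Iw n" using assms(1) unfolding LD_def by blast
  obtain z' u' where zu': "u' \<notin> M" "\<delta> dvd (z' - u' * \<pi> ^ i')" "y - \<delta> ^ e' * z' \<in> Iw (Suc m)"
    and w': "a * i' + b * e' = m" and yI: "y \<in> Iw m" using assms(2) unfolding LD_def by blast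
  have "u * u' \<notin> M"
  proof -
    obtain v v' where "u * v = 1" "u' * v' = 1" using notin_M_unit zu(1) zu'(1) by blast
    then have "(u * u') * (v * v') = 1" by (metis mult.assoc mult.left_commute mult_1)
    then have "(u * u') dvd 1" by (metis dvd_triv_left)
    then show ?thesis using notin_M_iff by blast
  qed
  moreover have "\<delta> dvd (z * z' - (u * u') * \<pi> ^ (i + i'))"
  proof -
    have "z * z' - (u * u') * \<pi> ^ (i + i') = (z - u * \<pi> ^ i) * z' + (u * \<pi> ^ i) * (z' - u' * \<pi> ^ i')"
      by (simp add: algebra_simps power_add)
    then show ?thesis using zu(2) zu'(2) by (simp add: dvd_add dvd_mult2 dvd_mult)
  qed
  moreover have "x * y - \<delta> ^ (e + e') * (z * z') \<in> Iw (Suc (n + m))"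
  proof -
    have dz: "\<delta> ^ e * z \<in> Iw n"
    proof -
      have "\<delta> ^ e * z = x - (x - \<delta> ^ e * z)" by simp
      also have "\<dots> \<in> Iw n" using ideal_diff[OF Iw_ideal xI] zu(3) Iw_Suc_sub by blast
      finally show ?thesis .
    qed
    have eq: "x * y - \<delta> ^ (e + e') * (z * z') = (x - \<delta> ^ e * z) * y + (\<delta> ^ e * z) * (y - \<delta> ^ e' * z')"
      by (simp add: algebra_simps power_add)
    have 1: "(x - \<delta> ^ e * z) * y \<in> Iw (Suc (n + m))" using Iw_mult[OF zu(3) yI] by simp
    have 2: "(\<delta> ^ e * z) * (y - \<delta> ^ e' * z') \<in> Iw (Suc (n + m))" using Iw_mult[OF dz zu'(3)] by simp
    show ?thesis unfolding eq by (rule ideal_add[OF Iw_ideal 1 2])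
  qed
  moreover have "x * y \<in> Iw (n + m)" by (rule Iw_mult[OF xI yI])
  moreover have "a * (i + i') + b * (e + e') = n + m" using w w' by (simp add: algebra_simps)
  ultimately show ?thesis unfolding LD_def by blast
qed

lemma Iw_inter: assumes "x \<noteq> 0" shows "\<exists>n. x \<notin> Iw n"
proof (rule ccontr)
  assume "\<not> (\<exists>n. x \<notin> Iw n)"
  then have allI: "\<forall>n. x \<in> Iw n" by blast
  have "\<exists>e. \<not> \<delta> ^ e dvd x" using delta_adic assms by blast
  define e0 where "e0 = (LEAST e. \<not> \<delta> ^ e dvd x)"
  have e0: "\<not> \<delta> ^ e0 dvd x" unfolding e0_def using LeastI_ex[OF \<open>\<exists>e. \<not> \<delta> ^ e dvd x\<close>] .
  then have "e0 \<noteq> 0" by (intro notI) simp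
  then obtain E where E: "e0 = Suc E" by (cases e0) auto
  have "\<delta> ^ E dvd x" using not_less_Least[of E "\<lambda>e. \<not> \<delta> ^ e dvd x"] E unfolding e0_def by auto
  then obtain g where g: "x = \<delta> ^ E * g" by (elim dvdE)
  have ng: "\<not> \<delta> dvd g"
  proof
    assume "\<delta> dvd g"
    then have "\<delta> ^ Suc E dvd \<delta> ^ E * g" by (simp add: mult_dvd_mono)
    then show False using e0 E g by simp
  qed
  have gI: "g \<in> Iw n" for n
  proof -
    have "\<delta> ^ E * g \<in> Iw (n + b * E)" using allI g by simp
    then show ?thesis by (rule colon_Iw_pow)
  qed
  have "\<forall>n. \<exists>y. \<delta> dvd g - \<pi> ^ n * y"
  proof
    fix n
    have "g \<in> Iw (a * n)" by (rule gI)
    then obtain r t where "g = \<pi> ^ n * r + \<delta> * t" using Iw_split0[of "a * n"] pw_0_mult by auto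
    then have "g - \<pi> ^ n * r = \<delta> * t" by simp
    then show "\<exists>y. \<delta> dvd g - \<pi> ^ n * y" by (metis dvd_triv_left)
  qed
  then have "\<delta> dvd g" by (rule krull_mod_delta)
  then show False using ng by blast
qed

definition w :: "'a \<Rightarrow> int" where
  "w x = int (GREATEST n. x \<in> Iw n)"

lemma w_char: assumes "x \<in> Iw n" "x \<notin> Iw (Suc n)" shows "w x = int n"
proof -
  have "(GREATEST n. x \<in> Iw n) = n"
  proof (rule Greatest_equality)
    show "x \<in> Iw n" by fact
    fix y assume "x \<in> Iw y"
    show "y \<le> n"
    proof (rule ccontr)
      assume "\<not> y \<le> n"
      then have "Iw y \<subseteq> Iw (Suc n)" by (intro Iw_anti) simp
      then show False using assms \<open>x \<in> Iw y\<close> by blast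
    qed
  qed
  then show ?thesis unfolding w_def by simp
qed

lemma w_ex: assumes "x \<noteq> 0" shows "\<exists>n. x \<in> Iw n \<and> x \<notin> Iw (Suc n) \<and> w x = int n"
proof -
  obtain N where N: "x \<notin> Iw N" using Iw_inter[OF assms] by blast
  define n where "n = (GREATEST n. x \<in> Iw n)"
  have bnd: "\<forall>y. x \<in> Iw y \<longrightarrow> y \<le> N"
  proof (intro allI impI)
    fix y assume "x \<in> Iw y"
    show "y \<le> N"
    proof (rule ccontr)
      assume "\<not> y \<le> N" then have "Iw y \<subseteq> Iw N" by (intro Iw_anti) simp
      then show False using N \<open>x \<in> Iw y\<close> by blast
    qed
  qed
  have x0: "x \<in> Iw 0" using Iw_0 by simp
  have "x \<in> Iw n" unfolding n_def by (rule GreatestI_nat[where P="\<lambda>n. x \<in> Iw n", OF x0 bnd[rule_format]])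
  moreover have "x \<notin> Iw (Suc n)"
  proof
    assume "x \<in> Iw (Suc n)"
    then have "Suc n \<le> n" unfolding n_def by (rule Greatest_le_nat[where P="\<lambda>n. x \<in> Iw n", OF _ bnd[rule_format]])

    then show False by simp
  qed
  ultimately show ?thesis using w_char by blast
qed

lemma w_LD: assumes "x \<noteq> 0" shows "\<exists>e i. LD x (nat (w x)) e i \<and> w x \<ge> 0"
proof -
  obtain n where n: "x \<in> Iw n" "x \<notin> Iw (Suc n)" "w x = int n" using w_ex[OF assms] by blast
  then show ?thesis using L1[OF n(1,2)] by auto
qed

lemma valp_w: "valp w"
  unfolding valp_def
proof (intro conjI allI impI)
  fix x y :: 'a assume x: "x \<noteq> 0" and y: "y \<noteq> 0"
  obtain n where n: "x \<in> Iw n" "x \<notin> Iw (Suc n)" "w x = int n" using w_ex[OF x] by blast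
  obtain m where m: "y \<in> Iw m" "y \<notin> Iw (Suc m)" "w y = int m" using w_ex[OF y] by blast
  obtain e i where ld1: "LD x n e i" using L1[OF n(1,2)] by blast
  obtain e' i' where ld2: "LD y m e' i'" using L1[OF m(1,2)] by blast
  have ld: "LD (x * y) (n + m) (e + e') (i + i')" by (rule L3[OF ld1 ld2])
  have "x * y \<in> Iw (n + m)" using ld unfolding LD_def by blast
  moreover have "x * y \<notin> Iw (Suc (n + m))" by (rule L2[OF ld])
  ultimately show "w (x * y) = w x + w y" using w_char n m by simp
  assume xy: "x + y \<noteq> 0"
  have x1: "x \<in> Iw (min n m)" using n(1) Iw_anti[of "min n m" n] by auto
  have y1: "y \<in> Iw (min n m)" using m(1) Iw_anti[of "min n m" m] by auto
  have "x + y \<in> Iw (min n m)" by (rule ideal_add[OF Iw_ideal x1 y1])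
  obtain k where k: "x + y \<in> Iw k" "x + y \<notin> Iw (Suc k)" "w (x + y) = int k" using w_ex[OF xy] by blast
  have "min n m \<le> k"
  proof (rule ccontr)
    assume "\<not> min n m \<le> k" then have "Iw (min n m) \<subseteq> Iw (Suc k)" by (intro Iw_anti) linarith
    then show False using k \<open>x + y \<in> Iw (min n m)\<close> by blast
  qed
  then show "min (w x) (w y) \<le> w (x + y)" using n m k by simp
qed

lemma w_nonneg: "w x \<ge> 0" unfolding w_def by simp

lemma w_pos_iff: assumes "x \<noteq> 0" shows "w x > 0 \<longleftrightarrow> x \<in> M"
proof -
  obtain n where n: "x \<in> Iw n" "x \<notin> Iw (Suc n)" "w x = int n" using w_ex[OF assms] by blast
  show ?thesis
  proof
    assume "w x > 0" then have "n \<ge> 1" using n by simp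
    then show "x \<in> M" using Iw_anti[of 1 n] n Iw_1 by blast
  next
    assume "x \<in> M" then have "x \<in> Iw 1" using Iw_1 by simp
    then have "n \<noteq> 0" using n by (metis One_nat_def)
    then show "w x > 0" using n by simp
  qed
qed

lemma w_ge_Iw: "x \<in> Iw k \<Longrightarrow> x \<noteq> 0 \<Longrightarrow> int k \<le> w x"
proof -
  assume "x \<in> Iw k" "x \<noteq> 0"
  then obtain n where n: "x \<in> Iw n" "x \<notin> Iw (Suc n)" "w x = int n" using w_ex by blast
  have "k \<le> n"
  proof (rule ccontr)
    assume "\<not> k \<le> n" then have "Iw k \<subseteq> Iw (Suc n)" by (intro Iw_anti) simp
    then show False using n \<open>x \<in> Iw k\<close> by blast
  qed
  then show ?thesis using n by simp
qed

lemma Iw_of_w: "x \<noteq> 0 \<Longrightarrow> int k \<le> w x \<Longrightarrow> x \<in> Iw k"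
proof -
  assume "x \<noteq> 0" "int k \<le> w x"
  then obtain n where n: "x \<in> Iw n" "x \<notin> Iw (Suc n)" "w x = int n" using w_ex by blast
  then have "k \<le> n" using \<open>int k \<le> w x\<close> by simp
  then show ?thesis using Iw_anti n by blast
qed

lemma w_pi: "w \<pi> = int a"
proof -
  have "LD \<pi> a 0 1"
  proof -
    have "(1::'a) \<notin> M \<and> \<delta> dvd (\<pi> - 1 * \<pi> ^ 1) \<and> \<pi> - \<delta> ^ 0 * \<pi> \<in> Iw (Suc a)"
      using one_notin_M ideal_0[OF Iw_ideal] by simp
    then have "\<exists>z u. u \<notin> M \<and> \<delta> dvd (z - u * \<pi> ^ 1) \<and> \<pi> - \<delta> ^ 0 * z \<in> Iw (Suc a)" by blast
    then show ?thesis unfolding LD_def using Iw_pi by simp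
  qed
  then show ?thesis using w_char[OF Iw_pi L2] by blast
qed

lemma w_delta: "w \<delta> = int b"
proof -
  have "LD \<delta> b 1 0"
  proof -
    have "(1::'a) \<notin> M \<and> \<delta> dvd (1 - 1 * \<pi> ^ 0) \<and> \<delta> - \<delta> ^ 1 * 1 \<in> Iw (Suc b)"
      using one_notin_M ideal_0[OF Iw_ideal] by simp
    then have "\<exists>z u. u \<notin> M \<and> \<delta> dvd (z - u * \<pi> ^ 0) \<and> \<delta> - \<delta> ^ 1 * z \<in> Iw (Suc b)" by blast
    then show ?thesis unfolding LD_def using Iw_delta by simp
  qed
  then show ?thesis using w_char[OF Iw_delta L2] by blast
qed

lemma Iw_M_mono: assumes "c \<in> M" "a * i + b * j = k" shows "c * (\<pi> ^ i * \<delta> ^ j) \<in> Iw (Suc k)"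
proof -
  obtain r1 r2 where r: "c = r1 * \<pi> + r2 * \<delta>" using assms(1) M_mem by blast
  have "\<pi> ^ Suc i * \<delta> ^ j \<in> Iw (Suc k)" using assms(2) apos by (intro Iw_mono) simp
  moreover have "\<pi> ^ i * \<delta> ^ Suc j \<in> Iw (Suc k)" using assms(2) bpos by (intro Iw_mono) simp
  moreover have "c * (\<pi> ^ i * \<delta> ^ j) = r1 * (\<pi> ^ Suc i * \<delta> ^ j) + r2 * (\<pi> ^ i * \<delta> ^ Suc j)"
    using r by (simp add: algebra_simps)
  ultimately show ?thesis using ideal_add[OF Iw_ideal] ideal_mult[OF Iw_ideal] by simp
qed

lemma factI:
  assumes "i0 < N" "j0 < N" "a * i0 + b * j0 = k" "c i0 j0 \<notin> M"
  shows "(\<Sum>i<N. \<Sum>j<N. if a * i + b * j = k then c i j * (\<pi> ^ i * \<delta> ^ j) else 0) \<notin> Iw (Suc k)"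
proof -
  define h where "h = (\<Sum>i<N. \<Sum>j<N. if a * i + b * j = k then c i j * (\<pi> ^ i * \<delta> ^ j) else 0)"
  define P where "P j \<longleftrightarrow> (\<exists>i<N. j < N \<and> a * i + b * j = k \<and> c i j \<notin> M)" for j
  have "P j0" using assms unfolding P_def by blast
  define e where "e = (LEAST j. P j)"
  have Pe: "P e" unfolding e_def by (rule LeastI[of P j0]) fact
  then obtain i where i: "i < N" "e < N" "a * i + b * e = k" "c i e \<notin> M" unfolding P_def by blast
  have minM: "c i' j' \<in> M" if "j' < e" "i' < N" "j' < N" "a * i' + b * j' = k" for i' j'
  proof -
    have "\<not> P j'" using not_less_Least[of j' P] that(1) unfolding e_def by blast
    then show ?thesis unfolding P_def using that by blast
  qed
  define zt where "zt i' j' = (if a * i' + b * j' = k \<and> e \<le> j' \<and> c i' j' \<notin> M then c i' j' * \<pi> ^ i' * \<delta> ^ (j' - e) else 0)" for i' j'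
  define z where "z = (\<Sum>i'<N. \<Sum>j'<N. zt i' j')"
  have hI: "h \<in> Iw k"
    unfolding h_def
    by (intro ideal_sum[OF Iw_ideal]) (auto intro!: ideal_mult[OF Iw_ideal] Iw_mono ideal_0[OF Iw_ideal])
  have "h - \<delta> ^ e * z = (\<Sum>i'<N. \<Sum>j'<N. (if a * i' + b * j' = k then c i' j' * (\<pi> ^ i' * \<delta> ^ j') else 0) - \<delta> ^ e * zt i' j')"
    unfolding h_def z_def by (simp add: sum_subtractf sum_distrib_left)
  also have "\<dots> \<in> Iw (Suc k)"
  proof (intro ideal_sum[OF Iw_ideal])
    fix i' j' assume ij: "i' \<in> {..<N}" "j' \<in> {..<N}"
    show "(if a * i' + b * j' = k then c i' j' * (\<pi> ^ i' * \<delta> ^ j') else 0) - \<delta> ^ e * zt i' j' \<in> Iw (Suc k)"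
    proof (cases "a * i' + b * j' = k")
      case True
      show ?thesis
      proof (cases "e \<le> j' \<and> c i' j' \<notin> M")
        case True2: True
        have "\<delta> ^ e * \<delta> ^ (j' - e) = \<delta> ^ j'" using True2 by (simp add: power_add[symmetric])
        then have "\<delta> ^ e * zt i' j' = c i' j' * (\<pi> ^ i' * \<delta> ^ j')"
          unfolding zt_def using True True2 by (simp add: algebra_simps)
        then show ?thesis using True ideal_0[OF Iw_ideal] by simp
      next
        case False
        then have "c i' j' \<in> M" using minM[of j' i'] ij True by force
        then have "c i' j' * (\<pi> ^ i' * \<delta> ^ j') \<in> Iw (Suc k)" using Iw_M_mono True by blast
        moreover have "zt i' j' = 0" unfolding zt_def using False by auto
        ultimately show ?thesis using True by simp
      qed
    next
      case False
      then show ?thesis unfolding zt_def using ideal_0[OF Iw_ideal] by simp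
    qed
  qed
  finally have hz: "h - \<delta> ^ e * z \<in> Iw (Suc k)" .
  have "\<delta> dvd (z - c i e * \<pi> ^ i)"
  proof -
    have dd: "(\<Sum>i'<N. \<Sum>j'<N. (if i' = i then (if j' = e then c i e * \<pi> ^ i else 0) else 0)) = c i e * \<pi> ^ i"
    proof -
      have "(\<Sum>i'<N. \<Sum>j'<N. (if i' = i then (if j' = e then c i e * \<pi> ^ i else 0) else 0))
          = (\<Sum>i'<N. if i' = i then c i e * \<pi> ^ i else 0)"
        by (rule sum.cong) (use i(2) in auto)
      also have "\<dots> = c i e * \<pi> ^ i" using i(1) by simp
      finally show ?thesis .
    qed
    have "z - c i e * \<pi> ^ i = (\<Sum>i'<N. \<Sum>j'<N. zt i' j' - (if i' = i then (if j' = e then c i e * \<pi> ^ i else 0) else 0))"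
      unfolding z_def by (simp only: sum_subtractf dd)
    also have "\<delta> dvd \<dots>"
    proof -
      have td: "\<delta> dvd zt i' j' - (if i' = i then (if j' = e then c i e * \<pi> ^ i else 0) else 0)"
        if ij: "i' < N" "j' < N" for i' j'
      proof (cases "a * i' + b * j' = k \<and> e \<le> j' \<and> c i' j' \<notin> M")
        case True
        show ?thesis
        proof (cases "j' = e")
          case True3: True
          then have "a * i' + b * e = a * i + b * e" using True i(3) by simp
          then have "a * i' = a * i" by simp
          then have "i' = i" using apos by simp
          then show ?thesis using True True3 unfolding zt_def by simp
        next
          case False
          then have "j' - e = Suc (j' - e - 1)" using True by linarith
          then have "\<delta> dvd \<delta> ^ (j' - e)" by (metis dvd_power Zero_not_Suc zero_less_iff_neq_zero)
          then have "\<delta> dvd zt i' j'" unfolding zt_def using True by simp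
          then show ?thesis using False by simp
        qed
      next
        case False
        then have z0: "zt i' j' = 0" unfolding zt_def by auto
        have "\<not> (i' = i \<and> j' = e)" using False i by auto
        then show ?thesis using z0 by auto
      qed
      show ?thesis by (intro ideal_sum[OF is_ideal_dvd, simplified]) (simp add: td)
    qed
    finally show ?thesis .
  qed
  then have "LD h k e i" unfolding LD_def using hI i hz by blast
  then show ?thesis using L2 unfolding h_def by blast
qed

end


lemma valp_inverse: assumes "valp v" "(x::'f::field) \<noteq> 0" shows "v (inverse x) = - v x"
  using valp_mult[OF assms(1), of x "inverse x"] valp_one[OF assms(1)] assms(2) by simp

lemma valp_divide: assumes "valp v" "(x::'f::field) \<noteq> 0" "y \<noteq> 0" shows "v (x / y) = v x - v y"
  using valp_mult[OF assms(1), of x "inverse y"] valp_inverse[OF assms(1,3)] assms(2,3)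
  by (simp add: divide_inverse)

lemma valp_power: assumes "valp v" "(x::'b::idom) \<noteq> 0" shows "v (x ^ n) = int n * v x"
proof (induction n)
  case 0 then show ?case using valp_one[OF assms(1)] by simp
next
  case (Suc n)
  then show ?case using valp_mult[OF assms(1), of x "x ^ n"] assms(2) by (simp add: algebra_simps)
qed

definition VR :: "('b::idom \<Rightarrow> int) \<Rightarrow> 'b set" where "VR v = {x. x = 0 \<or> 0 \<le> v x}"
definition VM :: "('b::idom \<Rightarrow> int) \<Rightarrow> 'b set" where "VM v = {x. x = 0 \<or> 0 < v x}"

lemma VR_add: "valp v \<Longrightarrow> x \<in> VR v \<Longrightarrow> y \<in> VR v \<Longrightarrow> x + y \<in> VR v"
  unfolding VR_def using valp_ge[of v x 0 y] by auto
lemma VM_add: "valp v \<Longrightarrow> x \<in> VM v \<Longrightarrow> y \<in> VM v \<Longrightarrow> x + y \<in> VM v"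
  unfolding VM_def using valp_ge[of v x 1 y] by auto
lemma VR_uminus: "valp v \<Longrightarrow> x \<in> VR v \<Longrightarrow> - x \<in> VR v"
  unfolding VR_def using valp_uminus[of v x] by auto
lemma VM_uminus: "valp v \<Longrightarrow> x \<in> VM v \<Longrightarrow> - x \<in> VM v"
  unfolding VM_def using valp_uminus[of v x] by auto
lemma VR_diff: "valp v \<Longrightarrow> x \<in> VR v \<Longrightarrow> y \<in> VR v \<Longrightarrow> x - y \<in> VR v"
  using VR_add[of v x "-y"] VR_uminus[of v y] by simp
lemma VM_diff: "valp v \<Longrightarrow> x \<in> VM v \<Longrightarrow> y \<in> VM v \<Longrightarrow> x - y \<in> VM v"
  using VM_add[of v x "-y"] VM_uminus[of v y] by simp
lemma VM_VR: "x \<in> VM v \<Longrightarrow> x \<in> VR v" unfolding VM_def VR_def by auto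
lemma VR_mult: "valp v \<Longrightarrow> x \<in> VR v \<Longrightarrow> y \<in> VR v \<Longrightarrow> x * y \<in> VR v"
  unfolding VR_def using valp_mult[of v x y] by (cases "x = 0 \<or> y = 0") auto
lemma VM_mult: "valp v \<Longrightarrow> x \<in> VR v \<Longrightarrow> y \<in> VM v \<Longrightarrow> x * y \<in> VM v"
  unfolding VR_def VM_def using valp_mult[of v x y] by (cases "x = 0 \<or> y = 0") auto
lemma VM_sum: "valp v \<Longrightarrow> (\<And>i. i \<in> A \<Longrightarrow> f i \<in> VM v) \<Longrightarrow> sum f A \<in> VM v"
proof (induction A rule: infinite_finite_induct)
  case (insert x F) then show ?case using VM_add[of v "f x" "sum f F"] by simp
qed (auto simp: VM_def)

definition embP :: "'b::idom \<Rightarrow> 'b fract" where "embP p = Fract p 1"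

lemma embP_add: "embP (x + y) = embP x + embP y" unfolding embP_def by simp
lemma embP_mult: "embP (x * y) = embP x * embP y" unfolding embP_def by simp
lemma embP_0: "embP 0 = 0" unfolding embP_def by (simp add: fract_collapse)
lemma embP_1: "embP 1 = 1" unfolding embP_def by (simp add: fract_collapse)
lemma embP_diff: "embP (x - y) = embP x - embP y" unfolding embP_def by simp
lemma embP_power: "embP (x ^ n) = embP x ^ n"
  by (induction n) (simp_all add: embP_1 embP_mult)
lemma embP_sum: "embP (sum f A) = (\<Sum>i\<in>A. embP (f i))"
  by (induction A rule: infinite_finite_induct) (simp_all add: embP_0 embP_add)
lemma embP_eq0: "embP x = 0 \<longleftrightarrow> x = 0" unfolding embP_def Zero_fract_def by (simp add: eq_fract)
lemma embP_if: "embP (if P then x else 0) = (if P then embP x else 0)" by (simp add: embP_0)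

lemma embR_alt: "embR r = embP [: embP r :]" unfolding embR_def embP_def ..
lemma embR_add: "embR (x + y) = embR x + embR y"
proof -
  have e: "[:embP x + embP y:] = [:embP x:] + [:embP y:]" by simp
  show ?thesis by (simp only: embR_alt embP_add e)
qed
lemma embR_mult: "embR (x * y) = embR x * embR y"
proof -
  have e: "[:embP x * embP y:] = [:embP x:] * [:embP y:]" by simp
  show ?thesis by (simp only: embR_alt embP_mult e)
qed
lemma embR_0: "embR 0 = 0" unfolding embR_alt by (simp add: embP_0)
lemma embR_1: "embR 1 = 1" unfolding embR_alt by (simp add: embP_1 one_pCons[symmetric])
lemma embR_diff: "embR (x - y) = embR x - embR y"
proof -
  have e: "[:embP x - embP y:] = [:embP x:] - [:embP y:]" by simp
  show ?thesis by (simp only: embR_alt embP_diff e)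
qed
lemma embR_power: "embR (x ^ n) = embR x ^ n"
  by (induction n) (simp_all add: embR_1 embR_mult)
lemma embR_sum: "embR (sum f A) = (\<Sum>i\<in>A. embR (f i))"
  by (induction A rule: infinite_finite_induct) (simp_all add: embR_0 embR_add)
lemma embR_eq0: "embR x = 0 \<longleftrightarrow> x = 0" unfolding embR_alt by (simp add: embP_eq0)
lemma embR_if: "embR (if P then x else 0) = (if P then embR x else 0)" by (simp add: embR_0)

lemma varT_alt: "varT = embP [:0, 1:]" unfolding varT_def embP_def ..
lemma varT_nz: "varT \<noteq> (0 :: 'b::idom ratfun)" unfolding varT_alt by (simp add: embP_eq0)

lemma embP_monom: "embP (monom c m) = embP [:c:] * varT ^ m"
proof -
  have "monom c m = [:c:] * [:0, 1:] ^ m" by (simp add: monom_altdef)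
  then show ?thesis unfolding varT_alt by (simp only: embP_mult embP_power)
qed


context R2
begin

lemma varT_nz': "(varT :: 'a ratfun) \<noteq> 0" by (rule varT_nz)

definition wK :: "'a fract \<Rightarrow> int" where "wK = fext w"
definition D :: "'a fract poly \<Rightarrow> int" where "D = gext wK"
definition dv :: "'a ratfun \<Rightarrow> int" where "dv = fext D"

lemma valp_wK: "valp wK" unfolding wK_def by (rule valp_fext[OF valp_w])
lemma valp_D: "valp D" unfolding D_def by (rule valp_gext[OF valp_wK])
lemma valp_dv: "valp dv" unfolding dv_def by (rule valp_fext[OF valp_D])

lemma wK_embP: "r \<noteq> 0 \<Longrightarrow> wK (embP r) = w r"
  unfolding wK_def embP_def using fext_Fract[OF valp_w, of r 1] valp_one[OF valp_w] by simp

lemma D_const: assumes "c \<noteq> 0" shows "D [:c:] = wK c"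
proof -
  have "D [:c:] \<le> wK (coeff [:c:] 0) + int 0" unfolding D_def by (rule gext_le) (use assms in simp)
  moreover have "wK c \<le> D [:c:]" unfolding D_def
  proof (rule gext_ge)
    show "[:c:] \<noteq> 0" using assms by simp
    fix m assume "coeff [:c:] m \<noteq> 0"
    then have "m = 0" by (cases m) auto
    then show "wK c \<le> wK (coeff [:c:] m) + int m" by simp
  qed
  ultimately show ?thesis by simp
qed

lemma dv_embP: "p \<noteq> 0 \<Longrightarrow> dv (embP p) = D p"
  unfolding dv_def embP_def using fext_Fract[OF valp_D, of p 1] valp_one[OF valp_D] by simp

lemma dv_embR: assumes "r \<noteq> 0" shows "dv (embR r) = w r"
proof -
  have "embP r \<noteq> 0" using assms embP_eq0 by blast
  then have "[:embP r:] \<noteq> 0" by simp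
  then show ?thesis unfolding embR_alt using dv_embP D_const wK_embP assms \<open>embP r \<noteq> 0\<close> by simp
qed

lemma D_X: "D [:0, 1:] = 1"
proof -
  have "D [:0, 1:] \<le> wK (coeff [:0, 1:] 1) + int 1" unfolding D_def by (rule gext_le) simp
  moreover have "1 \<le> D [:0, 1:]" unfolding D_def
  proof (rule gext_ge)
    show "[:0, 1:] \<noteq> (0 :: 'a fract poly)" by simp
    fix m assume "coeff [:0, 1::'a fract:] m \<noteq> 0"
    then have "m = 1" by (cases m) (auto simp: coeff_pCons split: nat.splits)
    then show "1 \<le> wK (coeff [:0, 1:] m) + int m" using valp_one[OF valp_wK] by simp
  qed
  ultimately show ?thesis using valp_one[OF valp_wK] by simp
qed

lemma dv_varT: "dv varT = 1"
  unfolding varT_alt using dv_embP[of "[:0, 1:]"] D_X by simp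

lemma dv_varT_pow: "dv (varT ^ n) = int n"
  using valp_power[OF valp_dv varT_nz', of n] dv_varT by simp

lemma dv_surj: "dv ` (UNIV - {0}) = UNIV"
proof (intro set_eqI iffI)
  fix z :: int assume "z \<in> UNIV"
  show "z \<in> dv ` (UNIV - {0})"
  proof (cases "z \<ge> 0")
    case True
    have e: "dv (varT ^ nat z) = z" using dv_varT_pow True by simp
    have "(varT :: 'a ratfun) ^ nat z \<in> UNIV - {0}" using varT_nz' by simp
    then show ?thesis using e by (intro image_eqI[where f=dv and x="varT ^ nat z"]) auto
  next
    case False
    have nz: "(varT :: 'a ratfun) ^ nat (- z) \<noteq> 0" using varT_nz' by simp
    have e: "dv (inverse (varT ^ nat (- z))) = z" using valp_inverse[OF valp_dv nz] dv_varT_pow False by simp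
    have "inverse ((varT :: 'a ratfun) ^ nat (- z)) \<in> UNIV - {0}" using nz by simp
    then show ?thesis using e by (intro image_eqI[where f=dv and x="inverse (varT ^ nat (- z))"]) auto
  qed
qed simp

lemma dv_discrete: "discrete_valuation dv"
  unfolding discrete_valuation_def using valp_dv dv_surj unfolding valp_def by blast

lemma val_ring_VR: "val_ring dv = VR dv" unfolding val_ring_def VR_def ..
lemma val_max_VM: "val_max dv = VM dv" unfolding val_max_def VM_def ..

abbreviation U :: "'a ratfun" where "U \<equiv> embR \<pi> / varT ^ a"
abbreviation V :: "'a ratfun" where "V \<equiv> embR \<delta> / varT ^ b"

lemma embR_pi_nz: "embR \<pi> \<noteq> 0" using embR_eq0 pi_nz by blast
lemma embR_delta_nz: "embR \<delta> \<noteq> 0" using embR_eq0 delta_nz by blast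

lemma dv_U: "dv U = 0"
  using embR_pi_nz valp_divide[OF valp_dv, of "embR \<pi>" "varT ^ a"] dv_embR[OF pi_nz] w_pi dv_varT_pow varT_nz' pi_nz embR_eq0
  by simp

lemma dv_V: "dv V = 0"
  using embR_delta_nz valp_divide[OF valp_dv, of "embR \<delta>" "varT ^ b"] dv_embR[OF delta_nz] w_delta dv_varT_pow varT_nz' delta_nz embR_eq0
  by simp

lemma embR_VR: "embR r \<in> VR dv"
  unfolding VR_def using dv_embR w_nonneg by (cases "r = 0") (auto simp: embR_0)

lemma embR_VM_iff: "embR r \<in> VM dv \<longleftrightarrow> r \<in> M"
proof (cases "r = 0")
  case True then show ?thesis unfolding VM_def using ideal_0[OF M_ideal] by (simp add: embR_0)
next
  case False
  then have "embR r \<noteq> 0" using embR_eq0 by blast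
  then show ?thesis unfolding VM_def using dv_embR[OF False] w_pos_iff[OF False] by simp
qed


lemma sum_lt: "N \<le> (K::nat) \<Longrightarrow> (\<Sum>i<K. if i < N then f i else 0) = (\<Sum>i<N. f i)"
proof -
  assume "N \<le> K"
  then have "{i \<in> {..<K}. i < N} = {..<N}" by (auto simp: less_le_trans)
  then show ?thesis by (simp add: sum.inter_filter[symmetric])
qed

lemma poly2_ext:
  assumes "N \<le> K"
  shows "poly2 N c u v = poly2 K (\<lambda>i j. if i < N \<and> j < N then c i j else 0) u v"
proof -
  have "poly2 K (\<lambda>i j. if i < N \<and> j < N then c i j else 0) u v
      = (\<Sum>i<K. if i < N then (\<Sum>j<K. if j < N then embR (c i j) * u ^ i * v ^ j else 0) else 0)"
    unfolding poly2_def by (rule sum.cong) (auto simp: embR_0 intro!: sum.cong)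
  also have "\<dots> = (\<Sum>i<N. (\<Sum>j<K. if j < N then embR (c i j) * u ^ i * v ^ j else 0))"
    by (rule sum_lt[OF assms])
  also have "\<dots> = (\<Sum>i<N. (\<Sum>j<N. embR (c i j) * u ^ i * v ^ j))"
    by (rule sum.cong) (auto simp: sum_lt[OF assms])
  finally show ?thesis unfolding poly2_def by simp
qed

lemma poly2_add_same: "poly2 K c u v + poly2 K c' u v = poly2 K (\<lambda>i j. c i j + c' i j) u v"
  unfolding poly2_def by (simp add: sum.distrib[symmetric] embR_add distrib_right)

lemma poly2_add: "\<exists>c''. poly2 N c u v + poly2 N' c' u v = poly2 (max N N') c'' u v"
  using poly2_ext[of N "max N N'" c u v] poly2_ext[of N' "max N N'" c' u v] poly2_add_same by (auto intro!: exI)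

lemma poly2_smult: "embR r * poly2 N c u v = poly2 N (\<lambda>i j. r * c i j) u v"
  unfolding poly2_def by (simp add: sum_distrib_left embR_mult mult.assoc)

lemma poly2_0: "poly2 0 c u v = 0" unfolding poly2_def by simp

lemma poly2_const: "poly2 1 (\<lambda>i j. r) u v = embR r" unfolding poly2_def by simp

lemma poly2_mono:
  assumes "i < K" "j < K"
  shows "poly2 K (\<lambda>i' j'. if i' = i \<and> j' = j then 1 else 0) u v = u ^ i * v ^ j"
proof -
  have t: "embR (if i' = i \<and> j' = j then 1 else 0) * u ^ i' * v ^ j'
     = (if i' = i then (if j' = j then u ^ i * v ^ j else 0) else 0)" for i' j'
    by (simp add: embR_0 embR_1)
  have "(\<Sum>i'<K. \<Sum>j'<K. (if i' = i then (if j' = j then u ^ i * v ^ j else 0) else 0))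
      = (\<Sum>i'<K. if i' = i then u ^ i * v ^ j else 0)"
    by (rule sum.cong) (use assms in auto)
  also have "\<dots> = u ^ i * v ^ j" using assms by simp
  finally show ?thesis unfolding poly2_def t .
qed

definition Ap :: "'a ratfun set" where "Ap = {y. \<exists>N c. y - poly2 N c U V \<in> VM dv}"

lemma VM_Ap: "y \<in> VM dv \<Longrightarrow> y \<in> Ap"
proof -
  assume "y \<in> VM dv"
  then have "y - poly2 0 (\<lambda>i j. 0) U V \<in> VM dv" by (simp add: poly2_0)
  then show ?thesis unfolding Ap_def by blast
qed

lemma Ap_0: "0 \<in> Ap" by (rule VM_Ap) (simp add: VM_def)

lemma Ap_poly: "poly2 N c U V \<in> Ap"
proof -
  have "poly2 N c U V - poly2 N c U V \<in> VM dv" by (simp add: VM_def)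
  then show ?thesis unfolding Ap_def by blast
qed

lemma Ap_add: assumes "x \<in> Ap" "y \<in> Ap" shows "x + y \<in> Ap"
proof -
  obtain N c where 1: "x - poly2 N c U V \<in> VM dv" using assms(1) unfolding Ap_def by blast
  obtain N' c' where 2: "y - poly2 N' c' U V \<in> VM dv" using assms(2) unfolding Ap_def by blast
  obtain c'' where 3: "poly2 N c U V + poly2 N' c' U V = poly2 (max N N') c'' U V" using poly2_add by blast
  have eq: "(x + y) - poly2 (max N N') c'' U V = (x - poly2 N c U V) + (y - poly2 N' c' U V)"
    unfolding 3[symmetric] by (simp add: algebra_simps)
  have "(x + y) - poly2 (max N N') c'' U V \<in> VM dv" unfolding eq by (rule VM_add[OF valp_dv 1 2])
  then show ?thesis unfolding Ap_def by blast
qed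

lemma Ap_mult: assumes "y \<in> Ap" shows "embR r * y \<in> Ap"
proof -
  obtain N c where 1: "y - poly2 N c U V \<in> VM dv" using assms(1) unfolding Ap_def by blast
  have "embR r * (y - poly2 N c U V) \<in> VM dv" by (rule VM_mult[OF valp_dv embR_VR 1])
  then have "embR r * y - poly2 N (\<lambda>i j. r * c i j) U V \<in> VM dv"
    by (simp add: right_diff_distrib poly2_smult)
  then show ?thesis unfolding Ap_def by blast
qed

lemma Ap_sum: "(\<And>i. i \<in> A \<Longrightarrow> f i \<in> Ap) \<Longrightarrow> sum f A \<in> Ap"
  by (induction A rule: infinite_finite_induct) (auto intro: Ap_0 Ap_add)

lemma U_nz: "U \<noteq> 0" using embR_pi_nz varT_nz' by simp
lemma V_nz: "V \<noteq> 0" using embR_delta_nz varT_nz' by simp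

lemma fld_id:
  fixes x y t :: "'f::field"
  assumes "t \<noteq> 0" "a * i + b * j = n + m"
  shows "(x / t ^ a) ^ i * (y / t ^ b) ^ j * t ^ m = x ^ i * y ^ j / t ^ n"
proof -
  have "t ^ (a * i) * t ^ (b * j) = t ^ n * t ^ m" using assms(2) by (simp add: power_add[symmetric])
  then show ?thesis using assms(1)
    by (simp add: power_divide power_mult[symmetric] field_simps mult.commute)
qed

lemma Ap_mono: assumes "n \<le> a * i + b * j" shows "embR (\<pi> ^ i * \<delta> ^ j) / varT ^ n \<in> Ap"
proof -
  define m where "m = a * i + b * j - n"
  have e: "embR (\<pi> ^ i * \<delta> ^ j) / varT ^ n = U ^ i * V ^ j * varT ^ m"
    using fld_id[where x="embR \<pi>" and y="embR \<delta>" and i=i and j=j and n=n and m=m, OF varT_nz'] assms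
    by (simp add: m_def embR_mult embR_power)
  show ?thesis
  proof (cases "m = 0")
    case True
    have "U ^ i * V ^ j = poly2 (Suc (max i j)) (\<lambda>i' j'. if i' = i \<and> j' = j then 1 else 0) U V"
      by (rule poly2_mono[symmetric]) auto
    then show ?thesis unfolding e using True Ap_poly by simp
  next
    case False
    have "dv (U ^ i * V ^ j * varT ^ m) = int m"
      using valp_mult[OF valp_dv, of "U ^ i * V ^ j" "varT ^ m"] valp_mult[OF valp_dv, of "U ^ i" "V ^ j"]
        valp_power[OF valp_dv U_nz, of i] valp_power[OF valp_dv V_nz, of j] dv_U dv_V dv_varT_pow
        U_nz V_nz varT_nz' by simp
    then have "U ^ i * V ^ j * varT ^ m \<in> VM dv" unfolding VM_def using False by simp
    then show ?thesis unfolding e by (rule VM_Ap)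
  qed
qed

lemma Ap_Iw: assumes "r \<in> Iw k" shows "embR r / varT ^ k \<in> Ap"
proof -
  have "Iw k \<subseteq> {r. embR r / varT ^ k \<in> Ap}"
  proof (rule Iw_least)
    show "is_ideal {r. embR r / varT ^ k \<in> Ap}"
      unfolding is_ideal_def
    proof (intro conjI ballI allI)
      show "0 \<in> {r. embR r / varT ^ k \<in> Ap}" using Ap_0 by (simp add: embR_0)
      fix x y assume "x \<in> {r. embR r / varT ^ k \<in> Ap}" "y \<in> {r. embR r / varT ^ k \<in> Ap}"
      then show "x + y \<in> {r. embR r / varT ^ k \<in> Ap}"
        using Ap_add by (simp add: embR_add add_divide_distrib)
    next
      fix r x assume "x \<in> {r. embR r / varT ^ k \<in> Ap}"
      then show "r * x \<in> {r. embR r / varT ^ k \<in> Ap}"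
        using Ap_mult[of "embR x / varT ^ k" r] by (simp add: embR_mult times_divide_eq_right)
    qed
    fix j
    show "\<pi> ^ pw k j * \<delta> ^ j \<in> {r. embR r / varT ^ k \<in> Ap}"
      using Ap_mono[of k "pw k j" j] pw_ge[of k j] by simp
  qed
  then show ?thesis using assms by blast
qed

lemma Ap_term: assumes "r \<noteq> 0" "int n \<le> w r + int m" shows "embR r * varT ^ m / varT ^ n \<in> Ap"
proof (cases "n \<le> m")
  case True
  have e: "embR r * varT ^ m / varT ^ n = embR r * varT ^ (m - n)"
    using True varT_nz' by (simp add: power_diff)
  show ?thesis
  proof (cases "m = n")
    case True
    then show ?thesis unfolding e using Ap_poly[of 1 "\<lambda>i j. r"] poly2_const[of r] by simp
  next
    case False
    have er: "embR r \<noteq> 0" using embR_eq0 assms(1) by blast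
    have "dv (embR r * varT ^ (m - n)) = w r + int (m - n)"
      using valp_mult[OF valp_dv er, of "varT ^ (m - n)"] dv_embR[OF assms(1)] dv_varT_pow
        varT_nz' by simp
    then have "embR r * varT ^ (m - n) \<in> VM dv" unfolding VM_def using False True w_nonneg[of r] by simp
    then show ?thesis unfolding e by (rule VM_Ap)
  qed
next
  case False
  have e: "embR r * varT ^ m / varT ^ n = embR r / varT ^ (n - m)"
  proof -
    have "varT ^ n = (varT :: 'a ratfun) ^ m * varT ^ (n - m)" using False by (simp add: power_add[symmetric])
    then show ?thesis using varT_nz' by simp
  qed
  have "r \<in> Iw (n - m)" using Iw_of_w[OF assms(1)] assms(2) False by simp
  then show ?thesis unfolding e by (rule Ap_Iw)
qed

lemma Ap_poly_frac:
  assumes co: "\<forall>m. coeff F m \<in> range embP" and Dn: "F = 0 \<or> int n \<le> D F"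
  shows "embP F / varT ^ n \<in> Ap"
proof -
  have "\<forall>m. \<exists>r. coeff F m = embP r" using co by blast
  then obtain rr where rr: "\<forall>m. coeff F m = embP (rr m)" by metis
  have "F = (\<Sum>m\<le>degree F. monom (coeff F m) m)" by (rule poly_as_sum_of_monoms[symmetric])
  then have "embP F = (\<Sum>m\<le>degree F. embP (monom (coeff F m) m))" by (metis embP_sum)
  also have "\<dots> = (\<Sum>m\<le>degree F. embR (rr m) * varT ^ m)"
    by (rule sum.cong) (simp_all add: embP_monom rr embR_alt)
  finally have "embP F / varT ^ n = (\<Sum>m\<le>degree F. embR (rr m) * varT ^ m / varT ^ n)"
    by (simp add: sum_divide_distrib)
  also have "\<dots> \<in> Ap"
  proof (rule Ap_sum)
    fix m
    show "embR (rr m) * varT ^ m / varT ^ n \<in> Ap"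
    proof (cases "rr m = 0")
      case True then show ?thesis using Ap_0 by (simp add: embR_0)
    next
      case False
      then have cnz: "coeff F m \<noteq> 0" using rr embP_eq0 by metis
      then have "F \<noteq> 0" by auto
      then have "int n \<le> D F" using Dn by simp
      also have "D F \<le> wK (coeff F m) + int m" unfolding D_def by (rule gext_le[OF cnz])
      also have "\<dots> = w (rr m) + int m" using rr wK_embP False by simp
      finally show ?thesis by (rule Ap_term[OF False])
    qed
  qed
  finally show ?thesis .
qed

end


context R2
begin

lemma zero_range_embP: "0 \<in> range embP" using embP_0 by (metis rangeI)

lemma clear_den: "\<exists>s. s \<noteq> 0 \<and> (\<forall>m. coeff (smult (embP s) P) m \<in> range embP)" for P :: "'a fract poly"
proof (induction P rule: pCons_induct)
  case 0
  show ?case using zero_range_embP by (intro exI[of _ 1]) simp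
next
  case (pCons c P)
  then obtain s' where s': "s' \<noteq> 0" "\<forall>m. coeff (smult (embP s') P) m \<in> range embP" by blast
  obtain r t where c: "c = Fract r t" "t \<noteq> 0" by (cases c)
  have "\<forall>m. coeff (smult (embP (t * s')) (pCons c P)) m \<in> range embP"
  proof
    fix m show "coeff (smult (embP (t * s')) (pCons c P)) m \<in> range embP"
    proof (cases m)
      case 0
      have "embP (t * s') * c = Fract (t * (s' * r)) (t * 1)" unfolding embP_def c by (simp add: ac_simps)
      also have "\<dots> = embP (s' * r)" unfolding embP_def by (rule mult_fract_cancel[OF c(2)])
      finally show ?thesis using 0 by simp
    next
      case (Suc k)
      obtain y where y: "coeff (smult (embP s') P) k = embP y" using s'(2) by blast
      have "embP (t * s') * coeff P k = embP t * coeff (smult (embP s') P) k" by (simp add: embP_mult)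
      also have "\<dots> = embP (t * y)" using y by (simp add: embP_mult)
      finally show ?thesis using Suc by simp
    qed
  qed
  then show ?case using s' c by (intro exI[of _ "t * s'"]) simp
qed

lemma D_nonneg: assumes "\<forall>m. coeff G m \<in> range embP" "G \<noteq> 0" shows "0 \<le> D G"
  unfolding D_def
proof (rule gext_ge[OF assms(2)])
  fix m assume nz: "coeff G m \<noteq> 0"
  obtain r where r: "coeff G m = embP r" using assms(1) by blast
  then have "r \<noteq> 0" using nz embP_0 by auto
  then show "0 \<le> wK (coeff G m) + int m" using r wK_embP w_nonneg by simp
qed

lemma VM_nz_dv: "y \<in> VR dv \<Longrightarrow> y \<notin> VM dv \<Longrightarrow> y \<noteq> 0 \<and> dv y = 0"
  unfolding VR_def VM_def by auto

lemma residue: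
  assumes xr: "x \<in> VR dv"
  shows "\<exists>N c e. poly2 N e U V \<notin> VM dv \<and> x - poly2 N c U V / poly2 N e U V \<in> VM dv"
proof (cases "x = 0")
  case True
  have 1: "poly2 1 (\<lambda>i j. 1) U V = 1" unfolding poly2_def by (simp add: embR_1)
  have 0: "poly2 1 (\<lambda>i j. 0) U V = 0" unfolding poly2_def by (simp add: embR_0)
  have "(1 :: 'a ratfun) \<notin> VM dv" unfolding VM_def using valp_one[OF valp_dv] by simp
  then show ?thesis using True 0 1 by (intro exI[of _ 1] exI[of _ "\<lambda>i j. 0"] exI[of _ "\<lambda>i j. 1"]) (simp add: VM_def)
next
  case False
  obtain P Q where x: "x = Fract P Q" "Q \<noteq> 0" by (cases x)
  have P0: "P \<noteq> 0" using x False by (auto simp: fract_collapse)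
  obtain sP where sP: "sP \<noteq> 0" "\<forall>m. coeff (smult (embP sP) P) m \<in> range embP" using clear_den by blast
  obtain sQ where sQ: "sQ \<noteq> 0" "\<forall>m. coeff (smult (embP sQ) Q) m \<in> range embP" using clear_den by blast
  define cc where "cc = embP (sP * sQ)"
  have "sP * sQ \<noteq> 0" using sP sQ by simp
  then have cc0: "cc \<noteq> 0" unfolding cc_def using embP_eq0 by blast
  define F where "F = smult cc P"
  define G where "G = smult cc Q"
  have Fc: "\<forall>m. coeff F m \<in> range embP"
  proof
    fix m
    obtain y where y: "coeff (smult (embP sP) P) m = embP y" using sP(2) by blast
    have "coeff F m = embP sQ * coeff (smult (embP sP) P) m" unfolding F_def cc_def by (simp add: embP_mult ac_simps)
    also have "\<dots> = embP (sQ * y)" using y by (simp add: embP_mult)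
    finally show "coeff F m \<in> range embP" by simp
  qed
  have Gc: "\<forall>m. coeff G m \<in> range embP"
  proof
    fix m
    obtain y where y: "coeff (smult (embP sQ) Q) m = embP y" using sQ(2) by blast
    have "coeff G m = embP sP * coeff (smult (embP sQ) Q) m" unfolding G_def cc_def by (simp add: embP_mult ac_simps)
    also have "\<dots> = embP (sP * y)" using y by (simp add: embP_mult)
    finally show "coeff G m \<in> range embP" by simp
  qed
  have F0: "F \<noteq> 0" unfolding F_def using cc0 P0 by simp
  have G0: "G \<noteq> 0" unfolding G_def using cc0 x(2) by simp
  have xFG: "x = embP F / embP G"
  proof -
    have "Fract P Q = Fract F G" using x(2) G0 unfolding F_def G_def by (simp add: eq_fract)
    then show ?thesis using x unfolding embP_def by (simp add: divide_fract)
  qed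
  have eF0: "embP F \<noteq> 0" and eG0: "embP G \<noteq> 0" using F0 G0 embP_eq0 by auto
  have dvx: "dv x = D F - D G" unfolding xFG using valp_divide[OF valp_dv eF0 eG0] dv_embP F0 G0 by simp
  have "0 \<le> dv x" using xr False unfolding VR_def by simp
  then have DFG: "D G \<le> D F" using dvx by simp
  have DG0: "0 \<le> D G" by (rule D_nonneg[OF Gc G0])
  define n where "n = nat (D G)"
  have n: "int n = D G" unfolding n_def using DG0 by simp
  define F' where "F' = embP F / varT ^ n"
  define G' where "G' = embP G / varT ^ n"
  have F'A: "F' \<in> Ap" unfolding F'_def by (rule Ap_poly_frac[OF Fc]) (use n DFG in simp)
  have G'A: "G' \<in> Ap" unfolding G'_def by (rule Ap_poly_frac[OF Gc]) (use n in simp)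
  have Tn: "(varT :: 'a ratfun) ^ n \<noteq> 0" using varT_nz' by simp
  have F'0: "F' \<noteq> 0" and G'0: "G' \<noteq> 0" unfolding F'_def G'_def using eF0 eG0 Tn by auto
  have dvG': "dv G' = 0" unfolding G'_def using valp_divide[OF valp_dv eG0 Tn] dv_embP[OF G0] dv_varT_pow n by simp
  have dvF': "0 \<le> dv F'" unfolding F'_def using valp_divide[OF valp_dv eF0 Tn] dv_embP[OF F0] dv_varT_pow n DFG by simp
  have F'R: "F' \<in> VR dv" and G'R: "G' \<in> VR dv" unfolding VR_def using dvF' dvG' by auto
  have G'M: "G' \<notin> VM dv" unfolding VM_def using G'0 dvG' by simp
  obtain N1 c1 where 1: "F' - poly2 N1 c1 U V \<in> VM dv" using F'A unfolding Ap_def by blast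
  obtain N2 c2 where 2: "G' - poly2 N2 c2 U V \<in> VM dv" using G'A unfolding Ap_def by blast
  define K where "K = max N1 N2"
  define c1' where "c1' = (\<lambda>i j. if i < N1 \<and> j < N1 then c1 i j else 0)"
  define c2' where "c2' = (\<lambda>i j. if i < N2 \<and> j < N2 then c2 i j else 0)"
  have p1: "poly2 N1 c1 U V = poly2 K c1' U V" unfolding K_def c1'_def by (rule poly2_ext) simp
  have p2: "poly2 N2 c2 U V = poly2 K c2' U V" unfolding K_def c2'_def by (rule poly2_ext) simp
  define q1 where "q1 = poly2 K c1' U V"
  define q2 where "q2 = poly2 K c2' U V"
  have 1: "F' - q1 \<in> VM dv" using 1 p1 unfolding q1_def by simp
  have 2: "G' - q2 \<in> VM dv" using 2 p2 unfolding q2_def by simp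
  have q2M: "q2 \<notin> VM dv"
  proof
    assume "q2 \<in> VM dv"
    then have "(G' - q2) + q2 \<in> VM dv" by (rule VM_add[OF valp_dv 2])
    then show False using G'M by simp
  qed
  have q2R: "q2 \<in> VR dv"
  proof -
    have "G' - (G' - q2) \<in> VR dv" by (rule VR_diff[OF valp_dv G'R VM_VR[OF 2]])
    then show ?thesis by simp
  qed
  from VM_nz_dv[OF q2R q2M] have q20: "q2 \<noteq> 0" and dvq2: "dv q2 = 0" by auto
  have xq: "x = F' / G'" unfolding xFG F'_def G'_def using Tn by simp
  have eq: "x - q1 / q2 = (F' * (q2 - G') + G' * (F' - q1)) / (G' * q2)"
    unfolding xq using G'0 q20 by (simp add: field_simps)
  have num: "F' * (q2 - G') + G' * (F' - q1) \<in> VM dv"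
  proof (rule VM_add[OF valp_dv])
    have "q2 - G' \<in> VM dv" using VM_uminus[OF valp_dv 2] by simp
    then show "F' * (q2 - G') \<in> VM dv" by (rule VM_mult[OF valp_dv F'R])
    show "G' * (F' - q1) \<in> VM dv" by (rule VM_mult[OF valp_dv G'R 1])
  qed
  have den0: "G' * q2 \<noteq> 0" using G'0 q20 by simp
  have dvden: "dv (G' * q2) = 0" using valp_mult[OF valp_dv G'0 q20] dvG' dvq2 by simp
  have "x - q1 / q2 \<in> VM dv"
  proof (cases "F' * (q2 - G') + G' * (F' - q1) = 0")
    case True then show ?thesis unfolding eq by (simp add: VM_def)
  next
    case nz: False
    then have "0 < dv (F' * (q2 - G') + G' * (F' - q1))" using num unfolding VM_def by simp
    then show ?thesis unfolding eq VM_def using valp_divide[OF valp_dv nz den0] dvden by simp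
  qed
  then show ?thesis using q2M unfolding q1_def q2_def by blast
qed

lemma indep:
  assumes pm: "poly2 N c U V \<in> VM dv" and i0: "i0 < N" "j0 < N" "c i0 j0 \<notin> M"
  shows False
proof -
  define L where "L = a * N + b * N"
  define k0 where "k0 = a * i0 + b * j0"
  have bound: "a * i + b * j \<le> L" if "i < N" "j < N" for i j
  proof -
    have 1: "a * i \<le> a * N" by (rule mult_le_mono2) (use that in simp)
    have 2: "b * j \<le> b * N" by (rule mult_le_mono2) (use that in simp)
    show ?thesis unfolding L_def by (rule add_mono[OF 1 2])
  qed
  define h where "h = (\<Sum>i<N. \<Sum>j<N. if a * i + b * j = k0 then c i j * (\<pi> ^ i * \<delta> ^ j) else 0)"
  have hn: "h \<notin> Iw (Suc k0)" unfolding h_def by (rule factI[where c=c, OF i0(1,2) k0_def[symmetric] i0(3)])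
  have hI: "h \<in> Iw k0"
    unfolding h_def
    by (intro ideal_sum[OF Iw_ideal]) (auto intro!: ideal_mult[OF Iw_ideal] Iw_mono ideal_0[OF Iw_ideal])
  have h0: "h \<noteq> 0" using hn ideal_0[OF Iw_ideal] by auto
  have wh: "w h = int k0" by (rule w_char[OF hI hn])
  define H where "H = (\<Sum>i<N. \<Sum>j<N. monom (embP (c i j * (\<pi> ^ i * \<delta> ^ j))) (L - (a * i + b * j)))"
  have cH: "coeff H (L - k0) = embP h"
  proof -
    have "coeff H (L - k0) = (\<Sum>i<N. \<Sum>j<N. if L - (a * i + b * j) = L - k0 then embP (c i j * (\<pi> ^ i * \<delta> ^ j)) else 0)"
      unfolding H_def by (simp add: coeff_sum coeff_monom)
    also have "\<dots> = (\<Sum>i<N. \<Sum>j<N. if a * i + b * j = k0 then embP (c i j * (\<pi> ^ i * \<delta> ^ j)) else 0)"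
    proof (intro sum.cong refl)
      fix i j assume "i \<in> {..<N}" "j \<in> {..<N}"
      then have "a * i + b * j \<le> L" "k0 \<le> L" using bound i0 unfolding k0_def by auto
      then have "(L - (a * i + b * j) = L - k0) = (a * i + b * j = k0)" by linarith
      then show "(if L - (a * i + b * j) = L - k0 then embP (c i j * (\<pi> ^ i * \<delta> ^ j)) else 0) =
                 (if a * i + b * j = k0 then embP (c i j * (\<pi> ^ i * \<delta> ^ j)) else 0)" by simp
    qed
    also have "\<dots> = embP h" unfolding h_def by (simp add: embP_sum embP_if)
    finally show ?thesis .
  qed
  have "embP h \<noteq> 0" using h0 embP_eq0 by blast
  then have cH0: "coeff H (L - k0) \<noteq> 0" using cH by simp
  then have H0: "H \<noteq> 0" by auto
  have DH: "D H \<le> int L"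
  proof -
    have "D H \<le> wK (coeff H (L - k0)) + int (L - k0)" unfolding D_def by (rule gext_le[OF cH0])
    also have "\<dots> = int L" using cH wK_embP[OF h0] wh bound[OF i0(1,2)] unfolding k0_def by simp
    finally show ?thesis .
  qed
  have ident: "poly2 N c U V * varT ^ L = embP H"
  proof -
    have "embP H = (\<Sum>i<N. \<Sum>j<N. embR (c i j * (\<pi> ^ i * \<delta> ^ j)) * varT ^ (L - (a * i + b * j)))"
      unfolding H_def by (simp add: embP_sum embP_monom embR_alt)
    also have "\<dots> = (\<Sum>i<N. \<Sum>j<N. embR (c i j) * U ^ i * V ^ j * varT ^ L)"
    proof (intro sum.cong refl)
      fix i j assume ij: "i \<in> {..<N}" "j \<in> {..<N}"
      have uv: "U ^ i * V ^ j * varT ^ (a * i + b * j) = embR \<pi> ^ i * embR \<delta> ^ j"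
        using fld_id[where x="embR \<pi>" and y="embR \<delta>" and i=i and j=j and n=0 and m="a * i + b * j", OF varT_nz']
        by simp
      have TL: "(varT :: 'a ratfun) ^ L = varT ^ (a * i + b * j) * varT ^ (L - (a * i + b * j))"
        using bound[of i j] ij by (simp add: power_add[symmetric])
      have "embR (c i j) * U ^ i * V ^ j * varT ^ L
          = embR (c i j) * (U ^ i * V ^ j * varT ^ (a * i + b * j)) * varT ^ (L - (a * i + b * j))"
        unfolding TL by (simp add: ac_simps)
      also have "\<dots> = embR (c i j * (\<pi> ^ i * \<delta> ^ j)) * varT ^ (L - (a * i + b * j))"
        unfolding uv by (simp add: embR_mult embR_power)
      finally show "embR (c i j * (\<pi> ^ i * \<delta> ^ j)) * varT ^ (L - (a * i + b * j)) = embR (c i j) * U ^ i * V ^ j * varT ^ L"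
        by simp
    qed
    also have "\<dots> = poly2 N c U V * varT ^ L" unfolding poly2_def by (simp add: sum_distrib_right)
    finally show ?thesis by simp
  qed
  have eH0: "embP H \<noteq> 0" using H0 embP_eq0 by auto
  have p0: "poly2 N c U V \<noteq> 0" using ident eH0 by auto
  have TL0: "(varT :: 'a ratfun) ^ L \<noteq> 0" using varT_nz' by simp
  have "dv (poly2 N c U V) + int L = D H"
    using valp_mult[OF valp_dv p0 TL0] ident dv_embP[OF H0] dv_varT_pow by simp
  then have "dv (poly2 N c U V) \<le> 0" using DH by simp
  then show False using pm p0 unfolding VM_def by simp
qed

end

theorem lemma0p12:
  fixes M :: "'a::idom set" and \<pi> \<delta> :: 'a and a b :: nat
  assumes "noetherian_ring TYPE('a)" and "local_ring TYPE('a)"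
    and "maximal_ideal M" and "krull_dim TYPE('a) = 2"
    and "M = ideal2 \<pi> \<delta>"
    and "a > 0" and "b > 0"
  shows "\<exists>d :: 'a ratfun \<Rightarrow> int. discrete_valuation d \<and>
     d varT = 1 \<and> d (embR \<pi>) = int a \<and> d (embR \<delta>) = int b \<and>
     (\<forall>r. embR r \<in> val_ring d) \<and> (\<forall>r. embR r \<in> val_max d \<longleftrightarrow> r \<in> M) \<and>
     (let u = embR \<pi> / varT ^ a; v = embR \<delta> / varT ^ b in
        u \<in> val_ring d \<and> v \<in> val_ring d \<and>
        (\<forall>x \<in> val_ring d. \<exists>N c e. poly2 N e u v \<notin> val_max d \<and>
            x - poly2 N c u v / poly2 N e u v \<in> val_max d) \<and>
        (\<forall>N c. poly2 N c u v \<in> val_max d \<longrightarrow> (\<forall>i<N. \<forall>j<N. c i j \<in> M)))"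
proof -
  interpret R: R2 M \<pi> \<delta> a b by unfold_locales (use assms in auto)
  have 1: "discrete_valuation R.dv" by (rule R.dv_discrete)
  have 2: "R.dv varT = 1" by (rule R.dv_varT)
  have 3: "R.dv (embR \<pi>) = int a" using R.dv_embR[OF R.pi_nz] R.w_pi by simp
  have 4: "R.dv (embR \<delta>) = int b" using R.dv_embR[OF R.delta_nz] R.w_delta by simp
  have 5: "\<forall>r. embR r \<in> val_ring R.dv" unfolding R.val_ring_VR using R.embR_VR by blast
  have 6: "\<forall>r. embR r \<in> val_max R.dv \<longleftrightarrow> r \<in> M" unfolding R.val_max_VM using R.embR_VM_iff by blast
  have 7: "embR \<pi> / varT ^ a \<in> val_ring R.dv" unfolding R.val_ring_VR VR_def using R.dv_U by simp
  have 8: "embR \<delta> / varT ^ b \<in> val_ring R.dv" unfolding R.val_ring_VR VR_def using R.dv_V by simp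
  have 9: "\<forall>x \<in> val_ring R.dv. \<exists>N c e. poly2 N e (embR \<pi> / varT ^ a) (embR \<delta> / varT ^ b) \<notin> val_max R.dv \<and>
            x - poly2 N c (embR \<pi> / varT ^ a) (embR \<delta> / varT ^ b) / poly2 N e (embR \<pi> / varT ^ a) (embR \<delta> / varT ^ b) \<in> val_max R.dv"
    unfolding R.val_ring_VR R.val_max_VM using R.residue by blast
  have 10: "\<forall>N c. poly2 N c (embR \<pi> / varT ^ a) (embR \<delta> / varT ^ b) \<in> val_max R.dv \<longrightarrow> (\<forall>i<N. \<forall>j<N. c i j \<in> M)"
    unfolding R.val_max_VM using R.indep by blast
  show ?thesis
    by (rule exI[of _ R.dv]) (unfold Let_def, use 1 2 3 4 5 6 7 8 9 10 in blast)
qed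


end
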